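(* Let $1\le a\le b\le n$, $h\in H_{n,\varpi_a}$ and $E\in B(\varpi_a)$. Write $$t^{\ell(u_E)}(T_{u_E^{-1}})^{-1}h=\sum_{F\in B(\varpi_b)}T_{u_F}h_F\qquad\text{with } h_F\in H_{n,\varpi_b}.$$ If $F\otimes E$ is not semistandard, then $h_F=0$.
   Context: Fix $n\ge1$, $[n]=\{1,\dots,n\}$. $S_n$ with simple transpositions $s_i$ and length $\ell(\cdot)$ acts on $\mathbb Z^n$ by permuting coordinates; $\varpi_k=\varepsilon_1+\dots+\varepsilon_k$; $S_{n,\lambda}$ is the stabilizer of $\lambda$. $H_n$ is the Iwahori–Hecke algebra of $S_n$ over $\mathbb Z[t^{\pm1}]$: generators $T_1,\dots,T_{n-1}$ with $T_i^2=(t-1)T_i+t$, $T_iT_{i+1}T_i=T_{i+1}T_iT_{i+1}$, $T_iT_j=T_jT_i$ ($|i-j|>1$); $T_w=T_{i_1}\cdots T_{i_m}$ for a reduced word; $\{T_w\}$ is a basis; $H_{n,\lambda}=\mathrm{span}\{T_w:w\in S_{n,\lambda}\}$. Every element of $H_n$ has a unique expression $\sum_{F\in B(\varpi_b)}T_{u_F}h_F$ with $h_F\in H_{n,\varpi_b}$. Columns: $B(\varpi_\ell)$ is the set of $C=(c_1<\dots<c_\ell)\subseteq[n]$; $u_C\in S_n$ sends $k\mapsto c_k$ ($k\le\ell$) and $\ell+1,\dots,n$ increasingly onto $[n]\setminus C$. For $F\in B(\varpi_b)$, $E\in B(\varpi_a)$, $a\le b$, $F\otimes E$ is the two-column filling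 with left column $F$ and right column $E$; it is semistandard iff $f_i\le e_i$ for all $i\in[a]$. *)

theory Defs
  imports "HOL-Library.Poly_Mapping" "HOL-Combinatorics.Permutations" "HOL-Combinatorics.Transposition"
begin

section \<open>Laurent polynomials Z[t, t^-1] as the group ring Z[Z]\<close>

type_synonym laurent = "int \<Rightarrow>\<^sub>0 int"

definition tvar :: laurent where "tvar = Poly_Mapping.single 1 1"
definition tinv :: laurent where "tinv = Poly_Mapping.single (-1) 1"

definition Sn :: "nat \<Rightarrow> (nat \<Rightarrow> nat) set" where
  "Sn n = {w. w permutes {1..n}}"

definition simple :: "nat \<Rightarrow> nat \<Rightarrow> nat" where
  "simple i = transpose i (Suc i)"

definition len :: "nat \<Rightarrow> (nat \<Rightarrow> nat) \<Rightarrow> nat" where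
  "len n w = card {(i, j). 1 \<le> i \<and> i < j \<and> j \<le> n \<and> w i > w j}"

definition word_perm :: "nat list \<Rightarrow> nat \<Rightarrow> nat" where
  "word_perm ws = foldr (\<lambda>i acc. simple i \<circ> acc) ws id"

definition reduced_word :: "nat \<Rightarrow> (nat \<Rightarrow> nat) \<Rightarrow> nat list" where
  "reduced_word n w = (SOME ws. (\<forall>i\<in>set ws. 1 \<le> i \<and> i < n) \<and>
       word_perm ws = w \<and> length ws = len n w)"

section \<open>Iwahori-Hecke algebra H_n: coefficient functions w.r.t. the basis T_w\<close>

type_synonym hecke = "(nat \<Rightarrow> nat) \<Rightarrow> laurent"

definition in_Hn :: "nat \<Rightarrow> hecke \<Rightarrow> bool" where
  "in_Hn n h \<longleftrightarrow> (\<forall>w. w \<notin> Sn n \<longrightarrow> h w = 0)"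

definition Tb :: "(nat \<Rightarrow> nat) \<Rightarrow> hecke" where
  "Tb u = (\<lambda>w. if w = u then 1 else 0)"

definition hone :: hecke where "hone = Tb id"

definition hsmult :: "laurent \<Rightarrow> hecke \<Rightarrow> hecke" where
  "hsmult c h = (\<lambda>w. c * h w)"

text \<open>right multiplication by T_i, using
  T_w T_i = T_{w s_i} if l(w s_i) > l(w), and (t-1) T_w + t T_{w s_i} otherwise\<close>
definition rmul_s :: "nat \<Rightarrow> nat \<Rightarrow> hecke \<Rightarrow> hecke" where
  "rmul_s n i h = (\<lambda>w. if len n (w \<circ> simple i) < len n w
      then (tvar - 1) * h w + h (w \<circ> simple i)
      else tvar * h (w \<circ> simple i))"

definition rmul_T :: "nat \<Rightarrow> hecke \<Rightarrow> (nat \<Rightarrow> nat) \<Rightarrow> hecke" where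
  "rmul_T n h u = fold (rmul_s n) (reduced_word n u) h"

definition hmult :: "nat \<Rightarrow> hecke \<Rightarrow> hecke \<Rightarrow> hecke" where
  "hmult n h g = (\<lambda>w. \<Sum>u\<in>Sn n. g u * rmul_T n h u w)"

definition hinverse :: "nat \<Rightarrow> hecke \<Rightarrow> hecke" where
  "hinverse n x = (THE y. in_Hn n y \<and> hmult n x y = hone \<and> hmult n y x = hone)"

definition perm_act :: "(nat \<Rightarrow> nat) \<Rightarrow> (nat \<Rightarrow> int) \<Rightarrow> (nat \<Rightarrow> int)" where
  "perm_act w mu = (\<lambda>i. mu (inv w i))"

definition varpi :: "nat \<Rightarrow> nat \<Rightarrow> int" where
  "varpi k = (\<lambda>i. if 1 \<le> i \<and> i \<le> k then 1 else 0)"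

definition stab :: "nat \<Rightarrow> (nat \<Rightarrow> int) \<Rightarrow> (nat \<Rightarrow> nat) set" where
  "stab n mu = {w \<in> Sn n. perm_act w mu = mu}"

definition in_Hpar :: "nat \<Rightarrow> (nat \<Rightarrow> int) \<Rightarrow> hecke \<Rightarrow> bool" where
  "in_Hpar n mu h \<longleftrightarrow> (\<forall>w. w \<notin> stab n mu \<longrightarrow> h w = 0)"

definition B :: "nat \<Rightarrow> nat \<Rightarrow> nat set set" where
  "B n l = {C. C \<subseteq> {1..n} \<and> card C = l}"

definition col :: "nat set \<Rightarrow> nat \<Rightarrow> nat" where
  "col C k = sorted_list_of_set C ! (k - 1)"

definition uC :: "nat \<Rightarrow> nat set \<Rightarrow> nat \<Rightarrow> nat" where
  "uC n C = (\<lambda>k. if 1 \<le> k \<and> k \<le> n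
      then (sorted_list_of_set C @ sorted_list_of_set ({1..n} - C)) ! (k - 1)
      else k)"

definition semistandard :: "nat \<Rightarrow> nat set \<Rightarrow> nat set \<Rightarrow> bool" where
  "semistandard a F E \<longleftrightarrow> (\<forall>i\<in>{1..a}. col F i \<le> col E i)"

end

theory Submission
  imports Defs
begin


lemma simple_simple[simp]: "simple i (simple i x) = x"
  by (simp add: simple_def transpose_def)

lemma simple_comp_simple[simp]: "simple i \<circ> simple i = id"
  by (auto simp: fun_eq_iff)

lemma simple_permutes: "1 \<le> i \<Longrightarrow> i < n \<Longrightarrow> simple i permutes {1..n}"
  unfolding simple_def by (rule permutes_swap_id) auto

lemma Sn_comp: "v \<in> Sn n \<Longrightarrow> w \<in> Sn n \<Longrightarrow> v \<circ> w \<in> Sn n"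
  unfolding Sn_def by (auto intro: permutes_compose)

lemma Sn_simple_right: "1 \<le> i \<Longrightarrow> i < n \<Longrightarrow> (w \<circ> simple i \<in> Sn n) = (w \<in> Sn n)"
proof
  assume "1 \<le> i" "i < n" "w \<circ> simple i \<in> Sn n"
  then have "(w \<circ> simple i) \<circ> simple i \<in> Sn n"
    using Sn_comp[of _ n "simple i"] simple_permutes unfolding Sn_def by blast
  then show "w \<in> Sn n" by (simp add: o_assoc[symmetric])
qed (use Sn_comp simple_permutes in \<open>auto simp: Sn_def\<close>)

lemma Sn_simple_left: "1 \<le> i \<Longrightarrow> i < n \<Longrightarrow> (simple i \<circ> w \<in> Sn n) = (w \<in> Sn n)"
proof
  assume "1 \<le> i" "i < n" "simple i \<circ> w \<in> Sn n"
  then have "simple i \<circ> (simple i \<circ> w) \<in> Sn n"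
    using Sn_comp[of "simple i" n] simple_permutes unfolding Sn_def by blast
  then show "w \<in> Sn n" by (simp add: o_assoc)
qed (use Sn_comp simple_permutes in \<open>auto simp: Sn_def\<close>)

definition invs :: "nat \<Rightarrow> (nat \<Rightarrow> nat) \<Rightarrow> (nat \<times> nat) set" where
  "invs n w = {(i, j). 1 \<le> i \<and> i < j \<and> j \<le> n \<and> w i > w j}"

lemma len_invs: "len n w = card (invs n w)"
  by (simp add: len_def invs_def)

lemma finite_invs[simp]: "finite (invs n w)"
  by (rule finite_subset[of _ "{1..n} \<times> {1..n}"]) (auto simp: invs_def)

lemma Sn_inj: "w \<in> Sn n \<Longrightarrow> inj w"
  by (auto simp: Sn_def permutes_inj)

lemma Sn_range: "w \<in> Sn n \<Longrightarrow> x \<in> {1..n} \<Longrightarrow> w x \<in> {1..n}"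
  unfolding Sn_def using permutes_in_image[of w "{1..n}" x] by simp

lemma invs_right_aux:
  assumes "1 \<le> i" "i < n"
  shows "(simple i p, simple i q) \<in> invs n w - {(i, Suc i)} \<longleftrightarrow> (p, q) \<in> invs n (w \<circ> simple i) - {(i, Suc i)}"
  using assms by (auto simp: invs_def simple_def transpose_def split: if_splits)

lemma card_invs_right:
  assumes "1 \<le> i" "i < n"
  shows "card (invs n (w \<circ> simple i) - {(i, Suc i)}) = card (invs n w - {(i, Suc i)})"
proof -
  let ?f = "\<lambda>(p, q). (simple i p, simple i q)"
  have "bij_betw ?f (invs n (w \<circ> simple i) - {(i, Suc i)}) (invs n w - {(i, Suc i)})"
  proof (rule bij_betwI[where g = ?f])
    show "?f \<in> invs n (w \<circ> simple i) - {(i, Suc i)} \<rightarrow> invs n w - {(i, Suc i)}"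
    proof
      fix x assume "x \<in> invs n (w \<circ> simple i) - {(i, Suc i)}"
      then obtain p q where x: "x = (p, q)" "(p, q) \<in> invs n (w \<circ> simple i) - {(i, Suc i)}"
        by (cases x) simp
      then show "?f x \<in> invs n w - {(i, Suc i)}"
        using invs_right_aux[OF assms, of p q w] by simp
    qed
    show "?f \<in> invs n w - {(i, Suc i)} \<rightarrow> invs n (w \<circ> simple i) - {(i, Suc i)}"
    proof
      fix x assume "x \<in> invs n w - {(i, Suc i)}"
      then obtain p q where x: "x = (p, q)" "(simple i (simple i p), simple i (simple i q)) \<in> invs n w - {(i, Suc i)}"
        by (cases x) simp
      then show "?f x \<in> invs n (w \<circ> simple i) - {(i, Suc i)}"
        using invs_right_aux[OF assms, of "simple i p" "simple i q" w] by simp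
    qed
  qed (clarsimp)+
  then show ?thesis by (rule bij_betw_same_card)
qed

lemma len_right_up:
  assumes "1 \<le> i" "i < n" "w i < w (Suc i)"
  shows "len n (w \<circ> simple i) = Suc (len n w)"
proof -
  have si: "simple i i = Suc i" "simple i (Suc i) = i" by (simp_all add: simple_def)
  have a: "(i, Suc i) \<in> invs n (w \<circ> simple i)" using assms unfolding invs_def by (simp add: si)
  have b: "(i, Suc i) \<notin> invs n w" using assms unfolding invs_def by simp
  have "card (invs n (w \<circ> simple i)) = Suc (card (invs n (w \<circ> simple i) - {(i, Suc i)}))"
    using a by (simp only: card_Suc_Diff1 finite_invs)
  also have "\<dots> = Suc (card (invs n w))" using card_invs_right[OF assms(1,2)] b by simp
  finally show ?thesis by (simp add: len_invs)
qed

lemma len_right_down: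
  assumes "1 \<le> i" "i < n" "w (Suc i) < w i"
  shows "Suc (len n (w \<circ> simple i)) = len n w"
proof -
  have e: "w \<circ> simple i \<circ> simple i = w" by (simp add: fun_eq_iff)
  have "(w \<circ> simple i) i < (w \<circ> simple i) (Suc i)" using assms by (simp add: simple_def)
  from len_right_up[OF assms(1,2) this] show ?thesis unfolding e by (simp add: comp_def)
qed

lemma len_right_le:
  assumes "1 \<le> i" "i < n" shows "len n (w \<circ> simple i) \<le> Suc (len n w)"
proof -
  have "card (invs n (w \<circ> simple i)) \<le> Suc (card (invs n (w \<circ> simple i) - {(i, Suc i)}))"
  proof (cases "(i, Suc i) \<in> invs n (w \<circ> simple i)")
    case True then show ?thesis by (simp only: card_Suc_Diff1 finite_invs order_refl)
  next
    case False then show ?thesis by simp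
  qed
  also have "\<dots> \<le> Suc (card (invs n w))"
    using card_invs_right[OF assms, of w] by (simp add: card_Diff1_le)
  finally show ?thesis by (simp add: len_invs)
qed



lemma invs_left_aux:
  assumes "w \<in> Sn n" "1 \<le> i" "i < n" "w p0 = i" "w q0 = Suc i" "p0 < q0"
    and "1 \<le> p" "p < q" "q \<le> n" "(p, q) \<noteq> (p0, q0)"
  shows "simple i (w q) < simple i (w p) \<longleftrightarrow> w q < w p"
proof -
  have inj: "inj w" using assms(1) by (rule Sn_inj)
  have "\<not> (w p = i \<and> w q = Suc i)"
  proof
    assume "w p = i \<and> w q = Suc i"
    then have "w p = w p0" "w q = w q0" using assms by auto
    then have "p = p0" "q = q0" using inj by (auto dest: injD)
    then show False using assms by simp
  qed
  moreover have "\<not> (w q = i \<and> w p = Suc i)"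
  proof
    assume "w q = i \<and> w p = Suc i"
    then have "w q = w p0" "w p = w q0" using assms by auto
    then have "q = p0" "p = q0" using inj by (auto dest: injD)
    then show False using assms by simp
  qed
  moreover have "w p \<noteq> w q" using inj assms(8) by (metis injD less_irrefl)
  ultimately show ?thesis by (auto simp: simple_def transpose_def)
qed

lemma len_left_up:
  assumes "w \<in> Sn n" "1 \<le> i" "i < n" "w p0 = i" "w q0 = Suc i" "p0 < q0" "1 \<le> p0" "q0 \<le> n"
  shows "len n (simple i \<circ> w) = Suc (len n w)"
proof -
  have eq: "invs n (simple i \<circ> w) - {(p0, q0)} = invs n w - {(p0, q0)}"
    using invs_left_aux[OF assms(1-6)] unfolding invs_def by auto
  have a: "(p0, q0) \<in> invs n (simple i \<circ> w)" using assms unfolding invs_def by (simp add: simple_def)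
  have b: "(p0, q0) \<notin> invs n w" using assms unfolding invs_def by simp
  have "card (invs n (simple i \<circ> w)) = Suc (card (invs n (simple i \<circ> w) - {(p0, q0)}))"
    using a by (simp only: card_Suc_Diff1 finite_invs)
  also have "\<dots> = Suc (card (invs n w))" using eq b by simp
  finally show ?thesis by (simp add: len_invs)
qed

lemma Sn_preimage:
  assumes "w \<in> Sn n" "x \<in> {1..n}" obtains p where "p \<in> {1..n}" "w p = x"
proof -
  have "w ` {1..n} = {1..n}" using assms(1) unfolding Sn_def by (simp add: permutes_image)
  then show ?thesis using assms(2) that by (metis imageE)
qed

lemma Sn_inv: "w \<in> Sn n \<Longrightarrow> inv w \<in> Sn n"
  unfolding Sn_def by (simp add: permutes_inv)

lemma Sn_inv_apply: "w \<in> Sn n \<Longrightarrow> w (inv w x) = x" "w \<in> Sn n \<Longrightarrow> inv w (w x) = x"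
  unfolding Sn_def by (auto simp: permutes_inverses)

lemma len_left_cases:
  assumes "w \<in> Sn n" "1 \<le> i" "i < n"
  shows "inv w i < inv w (Suc i) \<Longrightarrow> len n (simple i \<circ> w) = Suc (len n w)"
    and "inv w (Suc i) < inv w i \<Longrightarrow> Suc (len n (simple i \<circ> w)) = len n w"
proof -
  have iw: "inv w \<in> Sn n" using assms(1) by (rule Sn_inv)
  have r1: "inv w i \<in> {1..n}" "inv w (Suc i) \<in> {1..n}" using Sn_range[OF iw] assms by auto
  have w1: "w (inv w i) = i" "w (inv w (Suc i)) = Suc i" using Sn_inv_apply[OF assms(1)] by auto
  show "inv w i < inv w (Suc i) \<Longrightarrow> len n (simple i \<circ> w) = Suc (len n w)"
    using len_left_up[OF assms(1-3) w1] r1 by auto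
  assume lt: "inv w (Suc i) < inv w i"
  let ?v = "simple i \<circ> w"
  have v: "?v \<in> Sn n" using Sn_simple_left assms by blast
  have e1: "?v (inv w (Suc i)) = i" and e2: "?v (inv w i) = Suc i" using w1 by (auto simp: simple_def)
  have "len n (simple i \<circ> ?v) = Suc (len n ?v)"
    by (rule len_left_up[OF v assms(2,3) e1 e2 lt]) (use r1 in auto)
  moreover have eq: "simple i \<circ> ?v = w" by (simp add: fun_eq_iff)
  ultimately show "Suc (len n (simple i \<circ> w)) = len n w" by (simp only: eq)
qed

lemma len_left_le:
  assumes "w \<in> Sn n" "1 \<le> i" "i < n" shows "len n (simple i \<circ> w) \<le> Suc (len n w)"
proof -
  have "inv w i \<noteq> inv w (Suc i)"
    using Sn_inv_apply(1)[OF assms(1)] by (metis n_not_Suc_n)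
  then consider "inv w i < inv w (Suc i)" | "inv w (Suc i) < inv w i" by linarith
  then show ?thesis
  proof cases
    case 1 then show ?thesis using len_left_cases(1)[OF assms] by simp
  next
    case 2 then show ?thesis using len_left_cases(2)[OF assms] by simp
  qed
qed

lemma Dr_iff:
  assumes "w \<in> Sn n" "1 \<le> i" "i < n"
  shows "len n (w \<circ> simple i) < len n w \<longleftrightarrow> w (Suc i) < w i"
proof -
  have "w i \<noteq> w (Suc i)" using Sn_inj[OF assms(1)] by (simp add: inj_eq)
  then consider "w i < w (Suc i)" | "w (Suc i) < w i" by linarith
  then show ?thesis
  proof cases
    case 1 then show ?thesis using len_right_up[OF assms(2,3), of w] by simp
  next
    case 2 then show ?thesis using len_right_down[OF assms(2,3), of w] by simp
  qed
qed

lemma Dl_iff: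
  assumes "w \<in> Sn n" "1 \<le> i" "i < n"
  shows "len n (simple i \<circ> w) < len n w \<longleftrightarrow> inv w (Suc i) < inv w i"
proof -
  have "inv w i \<noteq> inv w (Suc i)"
    using Sn_inv_apply(1)[OF assms(1)] by (metis n_not_Suc_n)
  then consider "inv w i < inv w (Suc i)" | "inv w (Suc i) < inv w i" by linarith
  then show ?thesis
  proof cases
    case 1 then show ?thesis using len_left_cases(1)[OF assms] by simp
  next
    case 2 then show ?thesis using len_left_cases(2)[OF assms] by simp
  qed
qed

section \<open>Words\<close>

definition valid :: "nat \<Rightarrow> nat list \<Rightarrow> bool" where
  "valid n ws \<longleftrightarrow> (\<forall>i\<in>set ws. 1 \<le> i \<and> i < n)"

lemma valid_simps[simp]: "valid n []" "valid n (i # ws) \<longleftrightarrow> 1 \<le> i \<and> i < n \<and> valid n ws"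
  "valid n (ws @ vs) \<longleftrightarrow> valid n ws \<and> valid n vs" "valid n (rev ws) = valid n ws"
  by (auto simp: valid_def)

lemma word_perm_Nil[simp]: "word_perm [] = id"
  by (simp add: word_perm_def)

lemma word_perm_Cons[simp]: "word_perm (i # ws) = simple i \<circ> word_perm ws"
  by (simp add: word_perm_def)

lemma word_perm_append[simp]: "word_perm (ws @ vs) = word_perm ws \<circ> word_perm vs"
  by (induction ws) (auto simp: o_assoc)

lemma word_perm_Sn: "valid n ws \<Longrightarrow> word_perm ws \<in> Sn n"
proof (induction ws)
  case Nil then show ?case using permutes_id[of "{1..n}"] by (simp add: Sn_def id_def)
next
  case (Cons i ws) then show ?case using Sn_simple_left[of i n "word_perm ws"] by (simp add: comp_def)
qed

lemma word_perm_rev: "word_perm (rev ws) \<circ> word_perm ws = id"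
proof (induction ws)
  case (Cons i ws)
  then show ?case by (simp add: fun_eq_iff)
qed simp

lemma word_perm_rev_inv: "word_perm (rev ws) = inv (word_perm ws)"
proof -
  have "word_perm (rev (rev ws)) \<circ> word_perm (rev ws) = id" by (rule word_perm_rev)
  then have "word_perm ws \<circ> word_perm (rev ws) = id" by simp
  then show ?thesis using word_perm_rev[of ws] by (simp add: inv_unique_comp)
qed

lemma len_word_right: "valid n ws \<Longrightarrow> len n (v \<circ> word_perm ws) \<le> len n v + length ws"
proof (induction ws arbitrary: v)
  case Nil then show ?case by simp
next
  case (Cons i ws)
  have "len n (v \<circ> word_perm (i # ws)) = len n ((v \<circ> simple i) \<circ> word_perm ws)" by (simp add: o_assoc)
  also have "\<dots> \<le> len n (v \<circ> simple i) + length ws" using Cons.IH[of "v \<circ> simple i"] Cons.prems by (simp add: comp_def)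
  also have "\<dots> \<le> len n v + length (i # ws)" using len_right_le[of i n v] Cons.prems by simp
  finally show ?case .
qed

lemma len_word_left: "valid n ws \<Longrightarrow> v \<in> Sn n \<Longrightarrow> len n (word_perm ws \<circ> v) \<le> len n v + length ws"
proof (induction ws)
  case Nil then show ?case by simp
next
  case (Cons i ws)
  have s: "word_perm ws \<circ> v \<in> Sn n" using Cons word_perm_Sn Sn_comp by simp
  have "len n (word_perm (i # ws) \<circ> v) = len n (simple i \<circ> (word_perm ws \<circ> v))" by (simp add: o_assoc)
  also have "\<dots> \<le> Suc (len n (word_perm ws \<circ> v))" using len_left_le[OF s, of i] Cons.prems by simp
  also have "\<dots> \<le> len n v + length (i # ws)" using Cons.IH Cons.prems by (simp add: comp_def)
  finally show ?case .
qed

lemma len_id[simp]: "len n id = 0" "len n (\<lambda>x. x) = 0"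
proof -
  show "len n id = 0" unfolding len_def by (auto simp: card_eq_0_iff)
  then show "len n (\<lambda>x. x) = 0" by (simp add: id_def)
qed

lemma no_descent_id:
  assumes "w \<in> Sn n" "\<And>i. 1 \<le> i \<Longrightarrow> i < n \<Longrightarrow> w i < w (Suc i)"
  shows "w = id"
proof -
  have ge: "k \<le> w k" if "1 \<le> k" "k \<le> n" for k
    using that
  proof (induction k)
    case 0 then show ?case by simp
  next
    case (Suc k)
    show ?case
    proof (cases "k = 0")
      case True then show ?thesis using Sn_range[OF assms(1), of 1] Suc.prems by simp
    next
      case False
      then have k1: "1 \<le> k" by simp
      have kn: "k \<le> n" using Suc.prems by simp
      have "k \<le> w k" using Suc.IH[OF k1 kn] .
      moreover have "w k < w (Suc k)" using assms(2)[OF k1] Suc.prems by simp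
      ultimately show ?thesis by linarith
    qed
  qed
  have le: "w k \<le> k" if "1 \<le> k" "k \<le> n" for k
    using that
  proof (induction "n - k" arbitrary: k)
    case 0 then have "k = n" by simp
    then show ?case using Sn_range[OF assms(1), of k] 0 by simp
  next
    case (Suc m)
    have kn: "k < n" using Suc.hyps(2) by simp
    have "m = n - Suc k" using Suc.hyps(2) by simp
    then have "w (Suc k) \<le> Suc k" using Suc.hyps(1)[of "Suc k"] kn by simp
    moreover have "w k < w (Suc k)" using assms(2)[OF Suc.prems(1) kn] .
    ultimately show ?case by linarith
  qed
  show ?thesis
  proof
    fix x show "w x = id x"
    proof (cases "x \<in> {1..n}")
      case True then show ?thesis using ge le by (simp add: le_antisym)
    next
      case False then show ?thesis using assms(1) unfolding Sn_def by (simp add: permutes_not_in)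
    qed
  qed
qed

lemma simple_mem_interval: "1 \<le> i \<Longrightarrow> i \<noteq> a \<Longrightarrow> simple i x \<in> {1..a} \<longleftrightarrow> x \<in> {1..a}"
    unfolding simple_def transpose_def
    by (cases "x = i"; cases "x = Suc i") (simp_all, linarith+)

lemma simple_image_interval:
  assumes "1 \<le> i" "i \<noteq> a" shows "simple i ` {1..a} = {1..a}"
proof
  show "simple i ` {1..a} \<subseteq> {1..a}"
  proof
    fix y assume "y \<in> simple i ` {1..a}"
    then obtain x where x: "x \<in> {1..a}" "y = simple i x" by blast
    then show "y \<in> {1..a}" using simple_mem_interval[OF assms, of x] by simp
  qed
  show "{1..a} \<subseteq> simple i ` {1..a}"
  proof
    fix x assume "x \<in> {1..a}"
    then have "simple i x \<in> {1..a}" using simple_mem_interval[OF assms, of x] by simp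
    then show "x \<in> simple i ` {1..a}" using image_eqI[of x "simple i" "simple i x" "{1..a}"] by simp
  qed
qed

lemma exists_word:
  assumes "w \<in> Sn n" "w ` {1..a} = {1..a}"
  shows "\<exists>ws. valid n ws \<and> a \<notin> set ws \<and> word_perm ws = w \<and> length ws = len n w"
  using assms
proof (induction "len n w" arbitrary: w)
  case 0
  have "w = id"
  proof (rule no_descent_id[OF 0(2)])
    fix i assume i: "1 \<le> i" "i < n"
    have "w i \<noteq> w (Suc i)" using Sn_inj[OF 0(2)] by (simp add: inj_eq)
    moreover have "\<not> w (Suc i) < w i" using Dr_iff[OF 0(2) i] 0(1) by simp
    ultimately show "w i < w (Suc i)" by simp
  qed
  then show ?case by (intro exI[of _ "[]"]) (simp add: 0(1)[symmetric])
next
  case (Suc k)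
  have "\<exists>i. 1 \<le> i \<and> i < n \<and> w (Suc i) < w i"
  proof (rule ccontr)
    assume "\<not> ?thesis"
    then have "w = id"
    proof (intro no_descent_id[OF Suc(3)])
      fix i assume i: "1 \<le> i" "i < n"
      have "w i \<noteq> w (Suc i)" using Sn_inj[OF Suc(3)] by (simp add: inj_eq)
      then show "w i < w (Suc i)" using \<open>\<not> (\<exists>i. 1 \<le> i \<and> i < n \<and> w (Suc i) < w i)\<close> i by auto
    qed
    then show False using Suc(2) by simp
  qed
  then obtain i where i: "1 \<le> i" "i < n" "w (Suc i) < w i" by blast
  have ia: "i \<noteq> a"
  proof
    assume ia: "i = a"
    have "w a \<in> {1..a}" using Suc(4) i ia by auto
    moreover have "w (Suc a) \<notin> {1..a}"
    proof
      assume "w (Suc a) \<in> {1..a}"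
      then have "w (Suc a) \<in> w ` {1..a}" using Suc(4) by simp
      then have "Suc a \<in> {1..a}" using Sn_inj[OF Suc(3)] by (simp add: inj_image_mem_iff)
      then show False by simp
    qed
    moreover have "w (Suc a) \<ge> 1" using Sn_range[OF Suc(3), of "Suc a"] i ia by simp
    ultimately show False using i ia by simp
  qed
  let ?y = "w \<circ> simple i"
  have y: "?y \<in> Sn n" using Sn_simple_right[OF i(1,2)] Suc(3) by simp
  have ly: "k = len n ?y" using len_right_down[OF i] Suc(2) by simp
  have yi: "?y ` {1..a} = {1..a}" by (simp only: image_comp[symmetric] simple_image_interval[OF i(1) ia] Suc(4))
  obtain ws where ws: "valid n ws" "a \<notin> set ws" "word_perm ws = ?y" "length ws = len n ?y"
    using Suc(1)[OF ly y yi] by blast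
  have "word_perm (ws @ [i]) = w" using ws(3) by (simp add: o_assoc[symmetric])
  then show ?case using ws i ia ly Suc(2) by (intro exI[of _ "ws @ [i]"]) simp
qed

lemma reduced_word_spec:
  assumes "w \<in> Sn n"
  shows "valid n (reduced_word n w)" "word_perm (reduced_word n w) = w" "length (reduced_word n w) = len n w"
proof -
  have e: "w ` {1..0} = {1..0}" by simp
  obtain ws where ws: "valid n ws" "word_perm ws = w" "length ws = len n w"
    using exists_word[OF assms e] by auto
  let ?P = "\<lambda>ws. (\<forall>i\<in>set ws. 1 \<le> i \<and> i < n) \<and> word_perm ws = w \<and> length ws = len n w"
  have "?P ws" using ws unfolding valid_def by simp
  then have "?P (reduced_word n w)" unfolding reduced_word_def by (rule someI)
  then show "valid n (reduced_word n w)" "word_perm (reduced_word n w) = w" "length (reduced_word n w) = len n w"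
    unfolding valid_def by simp_all
qed

lemma len_inv: "w \<in> Sn n \<Longrightarrow> len n (inv w) = len n w"
proof -
  have le: "len n (inv w) \<le> len n w" if "w \<in> Sn n" for w
  proof -
    note r = reduced_word_spec[OF that]
    have "inv w = id \<circ> word_perm (rev (reduced_word n w))" using word_perm_rev_inv r(2) by simp
    then show ?thesis using len_word_right[of n "rev (reduced_word n w)" id] r by simp
  qed
  assume w: "w \<in> Sn n"
  have "inv (inv w) = w" using w unfolding Sn_def by (simp add: permutes_inv_inv)
  then show ?thesis using le[OF w] le[OF Sn_inv[OF w]] by simp
qed



definition lmul_s :: "nat \<Rightarrow> nat \<Rightarrow> hecke \<Rightarrow> hecke" where
  "lmul_s n i h = (\<lambda>w. if len n (simple i \<circ> w) < len n w
      then (tvar - 1) * h w + h (simple i \<circ> w)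
      else tvar * h (simple i \<circ> w))"

lemma simple_order:
  assumes "a \<noteq> b" "\<not> ((a = k \<and> b = Suc k) \<or> (a = Suc k \<and> b = k))"
  shows "simple k a < simple k b \<longleftrightarrow> a < b"
  using assms unfolding simple_def transpose_def
  by (cases "a = k"; cases "a = Suc k"; cases "b = k"; cases "b = Suc k") (simp_all, linarith+)

lemma exceptional:
  assumes w: "w \<in> Sn n" and c: "(w j = i \<and> w (Suc j) = Suc i) \<or> (w j = Suc i \<and> w (Suc j) = i)"
  shows "simple i \<circ> w = w \<circ> simple j"
proof
  fix x
  have inj: "inj w" using w by (rule Sn_inj)
  show "(simple i \<circ> w) x = (w \<circ> simple j) x"
  proof (cases "x = j \<or> x = Suc j")
    case True then show ?thesis using c by (auto simp: simple_def)
  next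
    case False
    then have "w x \<noteq> w j" "w x \<noteq> w (Suc j)" using inj by (auto simp: inj_eq)
    then have "w x \<noteq> i" "w x \<noteq> Suc i" using c by auto
    then show ?thesis using False by (simp add: simple_def transpose_def)
  qed
qed

lemma inv_comp_simple:
  assumes w: "w \<in> Sn n" and j: "1 \<le> j" "j < n"
  shows "inv (w \<circ> simple j) x = simple j (inv w x)"
proof -
  have "w \<circ> simple j \<in> Sn n" using Sn_simple_right[OF j] w by simp
  then have inj: "inj (w \<circ> simple j)" by (rule Sn_inj)
  have "(w \<circ> simple j) (simple j (inv w x)) = x" using Sn_inv_apply(1)[OF w] by simp
  then show ?thesis using inj by (simp add: inv_f_eq)
qed

lemma Tb_in_Hn: "v \<in> Sn n \<Longrightarrow> in_Hn n (Tb v)"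
  by (auto simp: in_Hn_def Tb_def)

lemma in_Hn_rmul: "in_Hn n h \<Longrightarrow> 1 \<le> i \<Longrightarrow> i < n \<Longrightarrow> in_Hn n (rmul_s n i h)"
  unfolding in_Hn_def rmul_s_def using Sn_simple_right by simp

lemma in_Hn_lmul: "in_Hn n h \<Longrightarrow> 1 \<le> i \<Longrightarrow> i < n \<Longrightarrow> in_Hn n (lmul_s n i h)"
  unfolding in_Hn_def lmul_s_def using Sn_simple_left by simp

lemma comm_lr:
  assumes h: "in_Hn n h" and i: "1 \<le> i" "i < n" and j: "1 \<le> j" "j < n"
  shows "lmul_s n i (rmul_s n j h) = rmul_s n j (lmul_s n i h)"
proof
  fix w
  have A: "simple i \<circ> (w \<circ> simple j) = simple i \<circ> w \<circ> simple j" by (simp add: o_assoc)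
  show "lmul_s n i (rmul_s n j h) w = rmul_s n j (lmul_s n i h) w"
  proof (cases "w \<in> Sn n")
    case False
    have "simple i \<circ> w \<notin> Sn n" "w \<circ> simple j \<notin> Sn n" "simple i \<circ> w \<circ> simple j \<notin> Sn n"
      using False Sn_simple_left[OF i] Sn_simple_right[OF j] by auto
    then have "h w = 0" "h (simple i \<circ> w) = 0" "h (w \<circ> simple j) = 0" "h (simple i \<circ> w \<circ> simple j) = 0"
      using h False unfolding in_Hn_def by auto
    then show ?thesis unfolding lmul_s_def rmul_s_def A by simp
  next
    case True
    have sw: "simple i \<circ> w \<in> Sn n" using Sn_simple_left[OF i] True by simp
    have wr: "w \<circ> simple j \<in> Sn n" using Sn_simple_right[OF j] True by simp
    define d where "d = (len n (simple i \<circ> w) < len n w)"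
    define e where "e = (len n (w \<circ> simple j) < len n w)"
    have lsw: "len n (simple i \<circ> w) \<noteq> len n w"
      using len_left_cases[OF True i] Sn_inv_apply(1)[OF True] by (metis n_not_Suc_n linorder_neqE_nat)
    show ?thesis
    proof (cases "(w j = i \<and> w (Suc j) = Suc i) \<or> (w j = Suc i \<and> w (Suc j) = i)")
      case True
      note ex = exceptional[OF \<open>w \<in> Sn n\<close> True]
      have E3: "simple i \<circ> w \<circ> simple j = w" using ex by (simp add: fun_eq_iff)
      have E2: "w \<circ> simple j = simple i \<circ> w" using ex by simp
      have ce: "e = d" unfolding d_def e_def E2 ..
      have c1: "(len n (simple i \<circ> w \<circ> simple j) < len n (simple i \<circ> w)) = (\<not> d)"
        unfolding E3 d_def using lsw by linarith
      have c2: "(len n (simple i \<circ> (simple i \<circ> w)) < len n (simple i \<circ> w)) = (\<not> d)"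
      proof -
        have SS: "simple i \<circ> (simple i \<circ> w) = w" by (simp add: fun_eq_iff)
        show ?thesis unfolding SS d_def using lsw by linarith
      qed
      show ?thesis unfolding lmul_s_def rmul_s_def A E3 d_def[symmetric] e_def[symmetric] c1
        unfolding E2 c2 ce
        by (cases d) (simp_all add: algebra_simps)
    next
      case False
      have ne: "w j \<noteq> w (Suc j)" using Sn_inj[OF \<open>w \<in> Sn n\<close>] by (simp add: inj_eq)
      have c1: "(len n (simple i \<circ> w \<circ> simple j) < len n (simple i \<circ> w)) = e"
      proof -
        have "(len n (simple i \<circ> w \<circ> simple j) < len n (simple i \<circ> w))
            = (simple i (w (Suc j)) < simple i (w j))" using Dr_iff[OF sw j] by simp
        also have "\<dots> = (w (Suc j) < w j)" using simple_order[of "w (Suc j)" "w j" i] ne False by auto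
        also have "\<dots> = e" unfolding e_def using Dr_iff[OF \<open>w \<in> Sn n\<close> j] by simp
        finally show ?thesis .
      qed
      have c2: "(len n (simple i \<circ> w \<circ> simple j) < len n (w \<circ> simple j)) = d"
      proof -
        have ne2: "inv w (Suc i) \<noteq> inv w i"
          using Sn_inv_apply(1)[OF \<open>w \<in> Sn n\<close>] by (metis n_not_Suc_n)
        have nf: "\<not> ((inv w (Suc i) = j \<and> inv w i = Suc j) \<or> (inv w (Suc i) = Suc j \<and> inv w i = j))"
          using False Sn_inv_apply(1)[OF \<open>w \<in> Sn n\<close>, of i] Sn_inv_apply(1)[OF \<open>w \<in> Sn n\<close>, of "Suc i"]
          by auto
        have "(len n (simple i \<circ> w \<circ> simple j) < len n (w \<circ> simple j))
            = (inv (w \<circ> simple j) (Suc i) < inv (w \<circ> simple j) i)"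
          using Dl_iff[OF wr i] unfolding A .
        also have "\<dots> = (simple j (inv w (Suc i)) < simple j (inv w i))"
          using inv_comp_simple[OF \<open>w \<in> Sn n\<close> j] by simp
        also have "\<dots> = (inv w (Suc i) < inv w i)" using simple_order[OF ne2 nf] .
        also have "\<dots> = d" unfolding d_def using Dl_iff[OF \<open>w \<in> Sn n\<close> i] by simp
        finally show ?thesis .
      qed
      show ?thesis unfolding lmul_s_def rmul_s_def A d_def[symmetric] e_def[symmetric] c1 c2
        by (cases d; cases e) (simp_all add: algebra_simps)
    qed
  qed
qed



lemma rmul_Tb_up:
  assumes v: "v \<in> Sn n" and i: "1 \<le> i" "i < n" and up: "v i < v (Suc i)"
  shows "rmul_s n i (Tb v) = Tb (v \<circ> simple i)"
proof
  fix w
  have l: "len n (v \<circ> simple i) = Suc (len n v)" using len_right_up[OF i up] .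
  have vv: "v \<circ> simple i \<circ> simple i = v" by (simp add: fun_eq_iff)
  show "rmul_s n i (Tb v) w = Tb (v \<circ> simple i) w"
  proof (cases "w = v \<circ> simple i")
    case True
    have "v \<circ> simple i \<noteq> v" using l by auto
    then show ?thesis unfolding rmul_s_def Tb_def True vv using l by simp
  next
    case False
    then have "w \<circ> simple i \<noteq> v" by (metis vv simple_comp_simple o_assoc comp_id)
    then show ?thesis unfolding rmul_s_def Tb_def using False l by auto
  qed
qed

lemma lmul_Tb_up:
  assumes v: "v \<in> Sn n" and l: "len n (simple i \<circ> v) = Suc (len n v)"
  shows "lmul_s n i (Tb v) = Tb (simple i \<circ> v)"
proof
  fix w
  have vv: "simple i \<circ> (simple i \<circ> v) = v" by (simp add: fun_eq_iff)
  show "lmul_s n i (Tb v) w = Tb (simple i \<circ> v) w"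
  proof (cases "w = simple i \<circ> v")
    case True
    have "simple i \<circ> v \<noteq> v" using l by auto
    then show ?thesis unfolding lmul_s_def Tb_def True vv using l by simp
  next
    case False
    have "w = simple i \<circ> v" if "simple i \<circ> w = v"
    proof -
      have "simple i \<circ> (simple i \<circ> w) = simple i \<circ> v" using that by simp
      then show ?thesis by (simp add: fun_eq_iff)
    qed
    then have "simple i \<circ> w \<noteq> v" using False by blast
    then show ?thesis unfolding lmul_s_def Tb_def using False l by auto
  qed
qed

lemma fold_rmul_Tb:
  "valid n ws \<Longrightarrow> v \<in> Sn n \<Longrightarrow> len n (v \<circ> word_perm ws) = len n v + length ws
   \<Longrightarrow> fold (rmul_s n) ws (Tb v) = Tb (v \<circ> word_perm ws)"
proof (induction ws arbitrary: v)
  case Nil then show ?case by simp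
next
  case (Cons i ws)
  have i: "1 \<le> i" "i < n" and vw: "valid n ws" using Cons.prems by auto
  have e: "v \<circ> word_perm (i # ws) = (v \<circ> simple i) \<circ> word_perm ws" by (simp add: o_assoc)
  have a: "len n ((v \<circ> simple i) \<circ> word_perm ws) \<le> len n (v \<circ> simple i) + length ws"
    using len_word_right[OF vw] .
  have b: "len n (v \<circ> simple i) \<le> Suc (len n v)" using len_right_le[OF i] .
  have c: "len n ((v \<circ> simple i) \<circ> word_perm ws) = len n v + Suc (length ws)"
    using Cons.prems(3) unfolding e by (simp add: comp_def)
  have lv: "len n (v \<circ> simple i) = Suc (len n v)" using a b c by linarith
  have up: "v i < v (Suc i)"
  proof (rule ccontr)
    assume "\<not> v i < v (Suc i)"
    moreover have "v i \<noteq> v (Suc i)" using Sn_inj[OF Cons.prems(2)] by (simp add: inj_eq)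
    ultimately have "v (Suc i) < v i" by simp
    from len_right_down[OF i this] lv show False by simp
  qed
  have vs: "v \<circ> simple i \<in> Sn n" using Sn_simple_right[OF i] Cons.prems(2) by simp
  have "fold (rmul_s n) (i # ws) (Tb v) = fold (rmul_s n) ws (Tb (v \<circ> simple i))"
    using rmul_Tb_up[OF Cons.prems(2) i up] by simp
  also have "\<dots> = Tb ((v \<circ> simple i) \<circ> word_perm ws)"
    using Cons.IH[OF vw vs] c lv by (simp add: comp_def)
  finally show ?case unfolding e .
qed

lemma foldr_lmul_Tb:
  "valid n ws \<Longrightarrow> v \<in> Sn n \<Longrightarrow> len n (word_perm ws \<circ> v) = len n v + length ws
   \<Longrightarrow> foldr (lmul_s n) ws (Tb v) = Tb (word_perm ws \<circ> v)"
proof (induction ws)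
  case Nil then show ?case by simp
next
  case (Cons i ws)
  have i: "1 \<le> i" "i < n" and vw: "valid n ws" using Cons.prems by auto
  have s: "word_perm ws \<circ> v \<in> Sn n" using word_perm_Sn[OF vw] Cons.prems(2) Sn_comp by simp
  have e: "word_perm (i # ws) \<circ> v = simple i \<circ> (word_perm ws \<circ> v)" by (simp add: o_assoc)
  have a: "len n (word_perm ws \<circ> v) \<le> len n v + length ws" using len_word_left[OF vw Cons.prems(2)] .
  have b: "len n (simple i \<circ> (word_perm ws \<circ> v)) \<le> Suc (len n (word_perm ws \<circ> v))"
    using len_left_le[OF s i] .
  have c: "len n (simple i \<circ> (word_perm ws \<circ> v)) = len n v + Suc (length ws)"
    using Cons.prems(3) unfolding e by (simp add: comp_def)
  have l1: "len n (word_perm ws \<circ> v) = len n v + length ws" using a b c by linarith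
  have l2: "len n (simple i \<circ> (word_perm ws \<circ> v)) = Suc (len n (word_perm ws \<circ> v))" using l1 c by linarith
  have "foldr (lmul_s n) (i # ws) (Tb v) = lmul_s n i (Tb (word_perm ws \<circ> v))"
    using Cons.IH[OF vw Cons.prems(2) l1] by (simp add: comp_def)
  also have "\<dots> = Tb (simple i \<circ> (word_perm ws \<circ> v))" by (rule lmul_Tb_up[OF s l2])
  finally show ?case unfolding e .
qed

section \<open>Linearity\<close>

lemma rmul_s_sum:
  "rmul_s n i (\<lambda>w. \<Sum>v\<in>S. c v * x v w) = (\<lambda>w. \<Sum>v\<in>S. c v * rmul_s n i (x v) w)"
  unfolding rmul_s_def
  by (auto simp: sum_distrib_left sum.distrib sum_subtractf algebra_simps fun_eq_iff)

lemma lmul_s_sum: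
  "lmul_s n i (\<lambda>w. \<Sum>v\<in>S. c v * x v w) = (\<lambda>w. \<Sum>v\<in>S. c v * lmul_s n i (x v) w)"
  unfolding lmul_s_def
  by (auto simp: sum_distrib_left sum.distrib sum_subtractf algebra_simps fun_eq_iff)

lemma fold_rmul_sum:
  "fold (rmul_s n) ws (\<lambda>w. \<Sum>v\<in>S. c v * x v w) = (\<lambda>w. \<Sum>v\<in>S. c v * fold (rmul_s n) ws (x v) w)"
proof (induction ws arbitrary: x)
  case Nil then show ?case by simp
next
  case (Cons i ws)
  show ?case using Cons.IH[of "\<lambda>v. rmul_s n i (x v)"] by (simp add: rmul_s_sum)
qed

lemma foldr_lmul_sum:
  "foldr (lmul_s n) ws (\<lambda>w. \<Sum>v\<in>S. c v * x v w) = (\<lambda>w. \<Sum>v\<in>S. c v * foldr (lmul_s n) ws (x v) w)"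
proof (induction ws)
  case Nil then show ?case by simp
next
  case (Cons i ws)
  show ?case using Cons.IH by (simp add: lmul_s_sum)
qed

lemma rmul_T_sum:
  "rmul_T n (\<lambda>w. \<Sum>v\<in>S. c v * x v w) u = (\<lambda>w. \<Sum>v\<in>S. c v * rmul_T n (x v) u w)"
  unfolding rmul_T_def by (rule fold_rmul_sum)

lemma hmult_sum1:
  "hmult n (\<lambda>w. \<Sum>v\<in>S. c v * x v w) g = (\<lambda>w. \<Sum>v\<in>S. c v * hmult n (x v) g w)"
  unfolding hmult_def rmul_T_sum
  by (auto simp: fun_eq_iff sum_distrib_left algebra_simps intro: sum.swap)

lemma hmult_sum2:
  "hmult n h (\<lambda>w. \<Sum>v\<in>S. c v * x v w) = (\<lambda>w. \<Sum>v\<in>S. c v * hmult n h (x v) w)"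
  unfolding hmult_def
  by (auto simp: fun_eq_iff sum_distrib_left sum_distrib_right algebra_simps intro: sum.swap)

lemma hmult_pair2:
  "hmult n h (\<lambda>w. c1 * g1 w + c2 * g2 w) = (\<lambda>w. c1 * hmult n h g1 w + c2 * hmult n h g2 w)"
  unfolding hmult_def
  by (auto simp: fun_eq_iff sum_distrib_left sum.distrib algebra_simps)

lemma rmul_s_pair:
  "rmul_s n i (\<lambda>w. c1 * g1 w + c2 * g2 w) = (\<lambda>w. c1 * rmul_s n i g1 w + c2 * rmul_s n i g2 w)"
  unfolding rmul_s_def by (auto simp: fun_eq_iff algebra_simps)

lemma fold_rmul_smult:
  "fold (rmul_s n) ws (\<lambda>w. c * x w) = (\<lambda>w. c * fold (rmul_s n) ws x w)"
proof (induction ws arbitrary: x)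
  case Nil then show ?case by simp
next
  case (Cons i ws)
  have "rmul_s n i (\<lambda>w. c * x w) = (\<lambda>w. c * rmul_s n i x w)"
    unfolding rmul_s_def by (auto simp: fun_eq_iff algebra_simps)
  then show ?case using Cons.IH by simp
qed

lemma hmult_smult1: "hmult n (hsmult c x) g = hsmult c (hmult n x g)"
  unfolding hmult_def hsmult_def rmul_T_def fold_rmul_smult
  by (auto simp: fun_eq_iff sum_distrib_left algebra_simps)

lemma hmult_smult2: "hmult n h (hsmult c g) = hsmult c (hmult n h g)"
  unfolding hmult_def hsmult_def
  by (auto simp: fun_eq_iff sum_distrib_left algebra_simps)



lemma Sn_id[simp]: "id \<in> Sn n"
  by (simp add: Sn_def permutes_id)

lemma finite_Sn[simp]: "finite (Sn n)"
  unfolding Sn_def by (rule finite_permutations) simp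

lemma simple_Sn: "1 \<le> i \<Longrightarrow> i < n \<Longrightarrow> simple i \<in> Sn n"
  using simple_permutes by (simp add: Sn_def)

lemma sum_Tb1: "finite S \<Longrightarrow> (\<Sum>u'\<in>S. Tb u u' * f u') = (if u \<in> S then f u else 0)"
proof -
  have "\<And>u'. Tb u u' * f u' = (if u = u' then f u' else 0)" by (simp add: Tb_def)
  moreover assume "finite S"
  ultimately show ?thesis by (simp add: sum.delta)
qed

lemma sum_Tb2: "finite S \<Longrightarrow> (\<Sum>v\<in>S. f v * Tb v w) = (if w \<in> S then f w else 0)"
proof -
  have "\<And>v. f v * Tb v w = (if w = v then f v else 0)" by (simp add: Tb_def)
  moreover assume "finite S"
  ultimately show ?thesis by (simp add: sum.delta)
qed

lemma rw_id: "reduced_word n id = []"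
  using reduced_word_spec(3)[OF Sn_id, of n] by simp

lemma rw_simple:
  assumes i: "1 \<le> i" "i < n" shows "reduced_word n (simple i) = [i]"
proof -
  have "len n (id \<circ> simple i) = Suc (len n id)" by (rule len_right_up[OF i]) simp
  then have l: "len n (simple i) = 1" by simp
  note r = reduced_word_spec[OF simple_Sn[OF i]]
  obtain j where j: "reduced_word n (simple i) = [j]" using r(3) l
    by (cases "reduced_word n (simple i)") auto
  then have "simple j = simple i" using r(2) by simp
  then have "simple j j = simple i j" by simp
  then have "j = i" unfolding simple_def transpose_def by (auto split: if_splits)
  then show ?thesis using j by simp
qed

lemma hmult_Tb2: "u \<in> Sn n \<Longrightarrow> hmult n h (Tb u) = rmul_T n h u"
  unfolding hmult_def by (simp add: sum_Tb1)

lemma hmult_one2: "hmult n h hone = h"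
  unfolding hone_def by (simp add: hmult_Tb2 rmul_T_def rw_id)

lemma hmult_simple2: "1 \<le> i \<Longrightarrow> i < n \<Longrightarrow> hmult n h (Tb (simple i)) = rmul_s n i h"
  by (simp add: hmult_Tb2 simple_Sn rmul_T_def rw_simple)

lemma rmul_T_Tb_id: "u \<in> Sn n \<Longrightarrow> rmul_T n (Tb id) u = Tb u"
proof -
  assume u: "u \<in> Sn n"
  note r = reduced_word_spec[OF u]
  have "fold (rmul_s n) (reduced_word n u) (Tb id) = Tb (id \<circ> word_perm (reduced_word n u))"
    by (rule fold_rmul_Tb[OF r(1) Sn_id]) (simp add: r)
  then show ?thesis unfolding rmul_T_def r(2) by simp
qed

lemma in_Hn_fold_rmul: "valid n ws \<Longrightarrow> in_Hn n h \<Longrightarrow> in_Hn n (fold (rmul_s n) ws h)"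
proof (induction ws arbitrary: h)
  case (Cons i ws)
  then have "in_Hn n (rmul_s n i h)" using in_Hn_rmul by simp
  then show ?case using Cons by simp
qed simp

lemma in_Hn_foldr_lmul: "valid n ws \<Longrightarrow> in_Hn n h \<Longrightarrow> in_Hn n (foldr (lmul_s n) ws h)"
  by (induction ws) (auto intro: in_Hn_lmul)

lemma in_Hn_rmul_T: "u \<in> Sn n \<Longrightarrow> in_Hn n h \<Longrightarrow> in_Hn n (rmul_T n h u)"
  unfolding rmul_T_def by (rule in_Hn_fold_rmul[OF reduced_word_spec(1)])

lemma in_Hn_hmult: "in_Hn n h \<Longrightarrow> in_Hn n (hmult n h g)"
  unfolding hmult_def using in_Hn_rmul_T unfolding in_Hn_def by simp

lemma in_Hn_hone[simp]: "in_Hn n hone"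
  unfolding hone_def by (rule Tb_in_Hn[OF Sn_id])

lemma hmult_one1: "in_Hn n g \<Longrightarrow> hmult n hone g = g"
proof (rule ext)
  fix w assume g: "in_Hn n g"
  have "hmult n hone g w = (\<Sum>u\<in>Sn n. g u * Tb u w)"
    unfolding hmult_def hone_def by (rule sum.cong) (simp_all add: rmul_T_Tb_id)
  also have "\<dots> = g w" using g unfolding in_Hn_def by (simp add: sum_Tb2)
  finally show "hmult n hone g w = g w" .
qed

lemma fold_rmul_lmul:
  "valid n ws \<Longrightarrow> in_Hn n h \<Longrightarrow> 1 \<le> i \<Longrightarrow> i < n
   \<Longrightarrow> fold (rmul_s n) ws (lmul_s n i h) = lmul_s n i (fold (rmul_s n) ws h)"
proof (induction ws arbitrary: h)
  case Nil then show ?case by simp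
next
  case (Cons j ws)
  have "fold (rmul_s n) (j # ws) (lmul_s n i h) = fold (rmul_s n) ws (lmul_s n i (rmul_s n j h))"
    using comm_lr[OF Cons.prems(2) Cons.prems(3,4), of j] Cons.prems(1) by simp
  also have "\<dots> = lmul_s n i (fold (rmul_s n) ws (rmul_s n j h))"
    using Cons.IH[of "rmul_s n j h"] Cons.prems in_Hn_rmul by simp
  finally show ?case by simp
qed

lemma hmult_lmul:
  assumes "in_Hn n h" "1 \<le> i" "i < n"
  shows "hmult n (lmul_s n i h) g = lmul_s n i (hmult n h g)"
proof -
  have "\<And>u. u \<in> Sn n \<Longrightarrow> rmul_T n (lmul_s n i h) u = lmul_s n i (rmul_T n h u)"
    unfolding rmul_T_def using fold_rmul_lmul[OF reduced_word_spec(1) assms] by simp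
  then have "hmult n (lmul_s n i h) g = (\<lambda>w. \<Sum>u\<in>Sn n. g u * lmul_s n i (rmul_T n h u) w)"
    unfolding hmult_def by simp
  also have "\<dots> = lmul_s n i (hmult n h g)"
    unfolding hmult_def lmul_s_sum ..
  finally show ?thesis .
qed

lemma hmult_foldr_lmul:
  "valid n ws \<Longrightarrow> in_Hn n h \<Longrightarrow> hmult n (foldr (lmul_s n) ws h) g = foldr (lmul_s n) ws (hmult n h g)"
proof (induction ws)
  case Nil then show ?case by simp
next
  case (Cons i ws)
  have "in_Hn n (foldr (lmul_s n) ws h)" using in_Hn_foldr_lmul Cons.prems by simp
  then show ?case using hmult_lmul[of n "foldr (lmul_s n) ws h" i g] Cons by simp
qed

lemma Tb_foldr: "v \<in> Sn n \<Longrightarrow> Tb v = foldr (lmul_s n) (reduced_word n v) hone"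
proof -
  assume v: "v \<in> Sn n"
  note r = reduced_word_spec[OF v]
  have "foldr (lmul_s n) (reduced_word n v) (Tb id) = Tb (word_perm (reduced_word n v) \<circ> id)"
    by (rule foldr_lmul_Tb[OF r(1) Sn_id]) (simp add: r)
  then show ?thesis unfolding hone_def r(2) by simp
qed

lemma expansion: "in_Hn n h \<Longrightarrow> h = (\<lambda>w. \<Sum>v\<in>Sn n. h v * Tb v w)"
  unfolding in_Hn_def by (auto simp: sum_Tb2)

lemma hmult_assoc:
  assumes h: "in_Hn n h" and g: "in_Hn n g" and k: "in_Hn n k"
  shows "hmult n (hmult n h g) k = hmult n h (hmult n g k)"
proof -
  have gk: "in_Hn n (hmult n g k)" using in_Hn_hmult[OF g] .
  have key: "hmult n (hmult n (Tb v) g) k = hmult n (Tb v) (hmult n g k)" if v: "v \<in> Sn n" for v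
  proof -
    let ?ws = "reduced_word n v"
    have vw: "valid n ?ws" using reduced_word_spec(1)[OF v] .
    have "hmult n (hmult n (Tb v) g) k = hmult n (foldr (lmul_s n) ?ws g) k"
      unfolding Tb_foldr[OF v] hmult_foldr_lmul[OF vw in_Hn_hone] hmult_one1[OF g] ..
    also have "\<dots> = foldr (lmul_s n) ?ws (hmult n g k)" by (rule hmult_foldr_lmul[OF vw g])
    also have "\<dots> = hmult n (Tb v) (hmult n g k)"
      unfolding Tb_foldr[OF v] hmult_foldr_lmul[OF vw in_Hn_hone] hmult_one1[OF gk] ..
    finally show ?thesis .
  qed
  have "hmult n (hmult n h g) k = hmult n (hmult n (\<lambda>w. \<Sum>v\<in>Sn n. h v * Tb v w) g) k"
    using expansion[OF h] by simp
  also have "\<dots> = (\<lambda>w. \<Sum>v\<in>Sn n. h v * hmult n (hmult n (Tb v) g) k w)"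
    unfolding hmult_sum1 ..
  also have "\<dots> = (\<lambda>w. \<Sum>v\<in>Sn n. h v * hmult n (Tb v) (hmult n g k) w)"
    using key by simp
  also have "\<dots> = hmult n (\<lambda>w. \<Sum>v\<in>Sn n. h v * Tb v w) (hmult n g k)"
    unfolding hmult_sum1 ..
  also have "\<dots> = hmult n h (hmult n g k)" using expansion[OF h] by simp
  finally show ?thesis .
qed



definition Ai :: "nat \<Rightarrow> hecke" where
  "Ai i = (\<lambda>w. Tb (simple i) w + (1 - tvar) * hone w)"

definition PT :: "nat \<Rightarrow> nat list \<Rightarrow> hecke" where
  "PT n ws = fold (\<lambda>i x. hmult n x (Tb (simple i))) ws hone"

definition QA :: "nat \<Rightarrow> nat list \<Rightarrow> hecke" where
  "QA n ws = fold (\<lambda>i x. hmult n x (Ai i)) ws hone"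

lemma tinv_tvar: "tinv * tvar = 1" "tvar * tinv = 1"
  unfolding tvar_def tinv_def by (simp_all add: mult_single)

lemma tpow_cancel: "tinv ^ m * tvar ^ m = 1" "tvar ^ m * tinv ^ m = 1"
  by (simp_all add: power_mult_distrib[symmetric] tinv_tvar)

lemma hsmult_hsmult: "hsmult c (hsmult d x) = hsmult (c * d) x"
  by (simp add: hsmult_def fun_eq_iff mult.assoc)

lemma hsmult_one[simp]: "hsmult 1 x = x"
  by (simp add: hsmult_def)

lemma in_Hn_hsmult: "in_Hn n x \<Longrightarrow> in_Hn n (hsmult c x)"
  by (simp add: in_Hn_def hsmult_def)

lemma in_Hn_Ai: "1 \<le> i \<Longrightarrow> i < n \<Longrightarrow> in_Hn n (Ai i)"
  using Tb_in_Hn[OF simple_Sn] in_Hn_hone unfolding in_Hn_def Ai_def hone_def by simp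

lemma len_simple: "1 \<le> i \<Longrightarrow> i < n \<Longrightarrow> len n (simple i) = 1"
  using len_right_up[of i n id] by simp

lemma Tb_sq:
  assumes i: "1 \<le> i" "i < n"
  shows "hmult n (Tb (simple i)) (Tb (simple i)) = (\<lambda>w. (tvar - 1) * Tb (simple i) w + tvar * hone w)"
proof (rule ext)
  fix w
  have l: "len n (simple i) = 1" using len_simple[OF i] .
  have sid: "simple i \<noteq> id"
  proof
    assume "simple i = id" then have "simple i i = i" by simp
    then show False by (simp add: simple_def)
  qed
  have e: "(w \<circ> simple i = simple i) \<longleftrightarrow> w = id"
  proof
    assume "w \<circ> simple i = simple i"
    then have "w \<circ> simple i \<circ> simple i = simple i \<circ> simple i" by simp
    then show "w = id" by (simp add: o_assoc[symmetric])
  qed simp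
  show "hmult n (Tb (simple i)) (Tb (simple i)) w = (tvar - 1) * Tb (simple i) w + tvar * hone w"
    unfolding hmult_simple2[OF i]
  proof (cases "w = simple i")
    case True
    then show "rmul_s n i (Tb (simple i)) w = (tvar - 1) * Tb (simple i) w + tvar * hone w"
      unfolding rmul_s_def Tb_def hone_def using l sid e by simp
  next
    case False
    show "rmul_s n i (Tb (simple i)) w = (tvar - 1) * Tb (simple i) w + tvar * hone w"
    proof (cases "w = id")
      case True
      then show ?thesis unfolding rmul_s_def Tb_def hone_def using l sid by simp
    next
      case False
      then show ?thesis unfolding rmul_s_def Tb_def hone_def using \<open>w \<noteq> simple i\<close> e by simp
    qed
  qed
qed

lemma T_A:
  assumes i: "1 \<le> i" "i < n"
  shows "hmult n (Tb (simple i)) (Ai i) = hsmult tvar hone"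
proof -
  have "Ai i = (\<lambda>w. 1 * Tb (simple i) w + (1 - tvar) * hone w)" unfolding Ai_def by simp
  then have "hmult n (Tb (simple i)) (Ai i)
     = (\<lambda>w. 1 * hmult n (Tb (simple i)) (Tb (simple i)) w + (1 - tvar) * hmult n (Tb (simple i)) hone w)"
    using hmult_pair2[of n "Tb (simple i)" 1 "Tb (simple i)" "1 - tvar" hone] by simp
  also have "\<dots> = hsmult tvar hone"
    unfolding Tb_sq[OF i] hmult_one2 hsmult_def by (simp add: fun_eq_iff algebra_simps)
  finally show ?thesis .
qed

lemma A_T:
  assumes i: "1 \<le> i" "i < n"
  shows "hmult n (Ai i) (Tb (simple i)) = hsmult tvar hone"
proof -
  have "Ai i = (\<lambda>w. 1 * Tb (simple i) w + (1 - tvar) * hone w)" unfolding Ai_def by simp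
  then have "hmult n (Ai i) (Tb (simple i)) = rmul_s n i (\<lambda>w. 1 * Tb (simple i) w + (1 - tvar) * hone w)"
    using hmult_simple2[OF i] by simp
  also have "\<dots> = (\<lambda>w. 1 * rmul_s n i (Tb (simple i)) w + (1 - tvar) * rmul_s n i hone w)"
    by (rule rmul_s_pair)
  also have "rmul_s n i hone = Tb (simple i)"
    unfolding hone_def using rmul_Tb_up[OF Sn_id i] by simp
  also have "rmul_s n i (Tb (simple i)) = hmult n (Tb (simple i)) (Tb (simple i))"
    using hmult_simple2[OF i] by simp
  finally show ?thesis
    unfolding Tb_sq[OF i] hsmult_def by (simp add: fun_eq_iff algebra_simps)
qed

lemma fold_hmult_pull:
  assumes Y: "\<And>i. i \<in> set ws \<Longrightarrow> in_Hn n (Y i)" and x: "in_Hn n x"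
  shows "fold (\<lambda>i x. hmult n x (Y i)) ws x = hmult n x (fold (\<lambda>i x. hmult n x (Y i)) ws hone)"
  using Y x
proof (induction ws arbitrary: x)
  case Nil then show ?case by (simp add: hmult_one2)
next
  case (Cons i ws)
  have Yi: "in_Hn n (Y i)" using Cons.prems by simp
  have Y': "\<And>j. j \<in> set ws \<Longrightarrow> in_Hn n (Y j)" using Cons.prems by simp
  have F: "in_Hn n (fold (\<lambda>i x. hmult n x (Y i)) ws hone)"
  proof -
    have "in_Hn n (fold (\<lambda>i x. hmult n x (Y i)) ws z)" if "in_Hn n z" for z
      using that by (induction ws arbitrary: z) (auto intro: in_Hn_hmult)
    then show ?thesis by simp
  qed
  have "fold (\<lambda>i x. hmult n x (Y i)) (i # ws) x = hmult n (hmult n x (Y i)) (fold (\<lambda>i x. hmult n x (Y i)) ws hone)"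
    using Cons.IH[OF Y' in_Hn_hmult[OF Cons.prems(2)]] by simp
  also have "\<dots> = hmult n x (hmult n (Y i) (fold (\<lambda>i x. hmult n x (Y i)) ws hone))"
    by (rule hmult_assoc[OF Cons.prems(2) Yi F])
  also have "\<dots> = hmult n x (fold (\<lambda>i x. hmult n x (Y i)) (i # ws) hone)"
    using Cons.IH[OF Y' Yi] by (simp add: hmult_one1[OF Yi])
  finally show ?case .
qed

lemma in_Hn_fold_hmult: "in_Hn n z \<Longrightarrow> in_Hn n (fold (\<lambda>i x. hmult n x (Y i)) ws z)"
  by (induction ws arbitrary: z) (auto intro: in_Hn_hmult)

lemma in_Hn_PT: "in_Hn n (PT n ws)"
  unfolding PT_def by (rule in_Hn_fold_hmult) simp

lemma in_Hn_QA: "in_Hn n (QA n ws)"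
  unfolding QA_def by (rule in_Hn_fold_hmult) simp

lemma PT_snoc: "PT n (ws @ [i]) = hmult n (PT n ws) (Tb (simple i))"
  unfolding PT_def by simp

lemma QA_snoc: "QA n (ws @ [i]) = hmult n (QA n ws) (Ai i)"
  unfolding QA_def by simp

lemma PT_Cons: "valid n ws \<Longrightarrow> 1 \<le> i \<Longrightarrow> i < n \<Longrightarrow> PT n (i # ws) = hmult n (Tb (simple i)) (PT n ws)"
proof -
  assume vw: "valid n ws" and i: "1 \<le> i" "i < n"
  have T: "in_Hn n (Tb (simple i))" using Tb_in_Hn[OF simple_Sn[OF i]] .
  have Y: "\<And>j. j \<in> set ws \<Longrightarrow> in_Hn n (Tb (simple j))"
    using vw Tb_in_Hn[OF simple_Sn] unfolding valid_def by blast
  have "PT n (i # ws) = fold (\<lambda>i x. hmult n x (Tb (simple i))) ws (Tb (simple i))"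
    unfolding PT_def using hmult_one1[OF T] by simp
  also have "\<dots> = hmult n (Tb (simple i)) (PT n ws)"
    unfolding PT_def by (rule fold_hmult_pull[OF Y T])
  finally show ?thesis .
qed

lemma PT_QA:
  "valid n ws \<Longrightarrow> hmult n (PT n (rev ws)) (QA n ws) = hsmult (tvar ^ length ws) hone"
proof (induction ws rule: rev_induct)
  case Nil then show ?case unfolding PT_def QA_def by (simp add: hmult_one1)
next
  case (snoc i ws)
  have i: "1 \<le> i" "i < n" and vw: "valid n ws" using snoc.prems by auto
  let ?T = "Tb (simple i)" and ?P = "PT n (rev ws)" and ?Q = "QA n ws"
  have T: "in_Hn n ?T" using Tb_in_Hn[OF simple_Sn[OF i]] .
  have A: "in_Hn n (Ai i)" using in_Hn_Ai[OF i] .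
  have "hmult n (PT n (rev (ws @ [i]))) (QA n (ws @ [i])) = hmult n (hmult n ?T ?P) (hmult n ?Q (Ai i))"
    using PT_Cons[of n "rev ws" i] vw i by (simp add: QA_snoc)
  also have "\<dots> = hmult n ?T (hmult n (hmult n ?P ?Q) (Ai i))"
    by (simp add: hmult_assoc T in_Hn_PT in_Hn_QA A in_Hn_hmult)
  also have "\<dots> = hmult n ?T (hsmult (tvar ^ length ws) (Ai i))"
    using snoc.IH[OF vw] by (simp add: hmult_smult1 hmult_one1[OF A])
  also have "\<dots> = hsmult (tvar ^ length (ws @ [i])) hone"
    by (simp add: hmult_smult2 T_A[OF i] hsmult_hsmult mult.commute)
  finally show ?case .
qed

lemma QA_PT:
  "valid n ws \<Longrightarrow> hmult n (QA n ws) (PT n (rev ws)) = hsmult (tvar ^ length ws) hone"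
proof (induction ws rule: rev_induct)
  case Nil then show ?case unfolding PT_def QA_def by (simp add: hmult_one1)
next
  case (snoc i ws)
  have i: "1 \<le> i" "i < n" and vw: "valid n ws" using snoc.prems by auto
  let ?T = "Tb (simple i)" and ?P = "PT n (rev ws)" and ?Q = "QA n ws"
  have T: "in_Hn n ?T" using Tb_in_Hn[OF simple_Sn[OF i]] .
  have A: "in_Hn n (Ai i)" using in_Hn_Ai[OF i] .
  have "hmult n (QA n (ws @ [i])) (PT n (rev (ws @ [i]))) = hmult n (hmult n ?Q (Ai i)) (hmult n ?T ?P)"
    using PT_Cons[of n "rev ws" i] vw i by (simp add: QA_snoc)
  also have "\<dots> = hmult n ?Q (hmult n (hmult n (Ai i) ?T) ?P)"
    by (simp add: hmult_assoc T in_Hn_PT in_Hn_QA A in_Hn_hmult)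
  also have "\<dots> = hmult n ?Q (hsmult tvar ?P)"
    by (simp add: A_T[OF i] hmult_smult1 hmult_one1[OF in_Hn_PT])
  also have "\<dots> = hsmult (tvar ^ length (ws @ [i])) hone"
    using snoc.IH[OF vw] by (simp add: hmult_smult2 hsmult_hsmult)
  finally show ?case .
qed

lemma fold_hmult_simple:
  "valid n ws \<Longrightarrow> fold (\<lambda>i x. hmult n x (Tb (simple i))) ws x = fold (rmul_s n) ws x"
  by (induction ws arbitrary: x) (simp_all add: hmult_simple2)

lemma PT_reduced:
  assumes "valid n ws" "len n (word_perm ws) = length ws"
  shows "PT n ws = Tb (word_perm ws)"
proof -
  have "PT n ws = fold (rmul_s n) ws (Tb id)"
    unfolding PT_def fold_hmult_simple[OF assms(1)] hone_def ..
  also have "\<dots> = Tb (id \<circ> word_perm ws)"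
    by (rule fold_rmul_Tb[OF assms(1) Sn_id]) (simp add: assms)
  finally show ?thesis by simp
qed

lemma PT_rev_rw:
  assumes u: "u \<in> Sn n"
  shows "PT n (rev (reduced_word n u)) = Tb (inv u)"
proof -
  note r = reduced_word_spec[OF u]
  have "word_perm (rev (reduced_word n u)) = inv u" using word_perm_rev_inv r(2) by simp
  moreover have "len n (inv u) = length (rev (reduced_word n u))" using len_inv[OF u] r(3) by simp
  ultimately show ?thesis using PT_reduced[of n "rev (reduced_word n u)"] r(1) by simp
qed

lemma inverse_pair:
  assumes u: "u \<in> Sn n"
  defines "Z \<equiv> hsmult (tinv ^ len n u) (QA n (reduced_word n u))"
  shows "in_Hn n Z" "hmult n (Tb (inv u)) Z = hone" "hmult n Z (Tb (inv u)) = hone"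
proof -
  note r = reduced_word_spec[OF u]
  show "in_Hn n Z" unfolding Z_def by (rule in_Hn_hsmult[OF in_Hn_QA])
  show "hmult n (Tb (inv u)) Z = hone"
    unfolding Z_def PT_rev_rw[OF u, symmetric] hmult_smult2 PT_QA[OF r(1)] r(3) hsmult_hsmult tpow_cancel
    by simp
  show "hmult n Z (Tb (inv u)) = hone"
    unfolding Z_def PT_rev_rw[OF u, symmetric] hmult_smult1 QA_PT[OF r(1)] r(3) hsmult_hsmult tpow_cancel
    by simp
qed

lemma hinverse_eq:
  assumes u: "u \<in> Sn n"
  shows "hinverse n (Tb (inv u)) = hsmult (tinv ^ len n u) (QA n (reduced_word n u))"
proof -
  let ?Z = "hsmult (tinv ^ len n u) (QA n (reduced_word n u))"
  let ?T = "Tb (inv u)"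
  note Z = inverse_pair[OF u]
  have T: "in_Hn n ?T" by (rule Tb_in_Hn[OF Sn_inv[OF u]])
  show ?thesis unfolding hinverse_def
  proof (rule the_equality)
    show "in_Hn n ?Z \<and> hmult n ?T ?Z = hone \<and> hmult n ?Z ?T = hone" using Z by simp
  next
    fix y assume y: "in_Hn n y \<and> hmult n ?T y = hone \<and> hmult n y ?T = hone"
    have "y = hmult n y (hmult n ?T ?Z)" using Z(2) by (simp add: hmult_one2)
    also have "\<dots> = hmult n (hmult n y ?T) ?Z" using hmult_assoc[OF _ T Z(1), of y] y by simp
    also have "\<dots> = ?Z" using y Z(1) by (simp add: hmult_one1)
    finally show "y = ?Z" .
  qed
qed



section \<open>Support lemmas\<close>

lemma rmul_supp: "rmul_s n i x w \<noteq> 0 \<Longrightarrow> x w \<noteq> 0 \<or> x (w \<circ> simple i) \<noteq> 0"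
  unfolding rmul_s_def by (auto split: if_splits)

lemma fold_rmul_supp:
  "(\<And>i w. i \<in> set ws \<Longrightarrow> P (w \<circ> simple i) \<Longrightarrow> P w) \<Longrightarrow> (\<And>w. x w \<noteq> 0 \<Longrightarrow> P w)
   \<Longrightarrow> fold (rmul_s n) ws x w \<noteq> 0 \<Longrightarrow> P w"
proof (induction ws arbitrary: x w)
  case Nil then show ?case by simp
next
  case (Cons i ws)
  note cl = Cons.prems(1) and xP = Cons.prems(2)
  have rP: "P w" if "rmul_s n i x w \<noteq> 0" for w
  proof (cases "x w \<noteq> 0")
    case True then show ?thesis using xP by blast
  next
    case False
    then have "x (w \<circ> simple i) \<noteq> 0" using rmul_supp[OF that] by blast
    then have "P (w \<circ> simple i)" using xP by blast
    moreover have "i \<in> set (i # ws)" by simp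
    ultimately show ?thesis using cl by blast
  qed
  have cl': "\<And>j w. j \<in> set ws \<Longrightarrow> P (w \<circ> simple j) \<Longrightarrow> P w" using cl by (meson list.set_intros(2))
  have nz: "fold (rmul_s n) ws (rmul_s n i x) w \<noteq> 0" using Cons.prems(3) by simp
  show ?case by (rule Cons.IH[where x="rmul_s n i x" and w=w, OF cl' rP nz])
qed

lemma hmult_PT:
  "valid n xs \<Longrightarrow> in_Hn n Z \<Longrightarrow> hmult n Z (PT n xs) = fold (rmul_s n) xs Z"
proof (induction xs rule: rev_induct)
  case Nil then show ?case unfolding PT_def by (simp add: hmult_one2)
next
  case (snoc i xs)
  have i: "1 \<le> i" "i < n" and vx: "valid n xs" using snoc.prems by auto
  have "hmult n Z (PT n (xs @ [i])) = hmult n (hmult n Z (PT n xs)) (Tb (simple i))"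
    unfolding PT_snoc
    by (rule hmult_assoc[symmetric, OF snoc.prems(2) in_Hn_PT Tb_in_Hn[OF simple_Sn[OF i]]])
  also have "\<dots> = rmul_s n i (fold (rmul_s n) xs Z)"
    using snoc.IH[OF vx snoc.prems(2)] hmult_simple2[OF i] by simp
  finally show ?case by simp
qed

lemma stab_image:
  assumes "x \<in> stab n (varpi c)"
  shows "x \<in> Sn n" "x ` {1..c} = {1..c}"
proof -
  show xs: "x \<in> Sn n" using assms by (simp add: stab_def)
  have pa: "perm_act x (varpi c) = varpi c" using assms by (simp add: stab_def)
  have iff: "inv x y \<in> {1..c} \<longleftrightarrow> y \<in> {1..c}" for y
  proof -
    have "varpi c (inv x y) = varpi c y" using pa unfolding perm_act_def by (metis)
    then show ?thesis unfolding varpi_def by (auto split: if_splits)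
  qed
  show "x ` {1..c} = {1..c}"
  proof
    show "x ` {1..c} \<subseteq> {1..c}"
    proof
      fix y assume "y \<in> x ` {1..c}"
      then obtain z where z: "z \<in> {1..c}" "y = x z" by blast
      have "inv x (x z) = z" using Sn_inv_apply(2)[OF xs] .
      then show "y \<in> {1..c}" using iff[of "x z"] z by simp
    qed
    show "{1..c} \<subseteq> x ` {1..c}"
    proof
      fix y assume y: "y \<in> {1..c}"
      then have "inv x y \<in> {1..c}" using iff by simp
      moreover have "x (inv x y) = y" using Sn_inv_apply(1)[OF xs] .
      ultimately show "y \<in> x ` {1..c}" by (metis image_eqI)
    qed
  qed
qed

lemma in_Hpar_Hn: "in_Hpar n mu h \<Longrightarrow> in_Hn n h"
  unfolding in_Hpar_def in_Hn_def stab_def by auto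

lemma sum_nonzero: "(\<Sum>v\<in>S. f v) \<noteq> (0::'a::comm_monoid_add) \<Longrightarrow> \<exists>v\<in>S. f v \<noteq> 0"
  by (metis sum.neutral)

lemma supp_hmult_par:
  assumes Z: "in_Hn n Z" and ZP: "\<And>w. Z w \<noteq> 0 \<Longrightarrow> P w"
    and cl: "\<And>i w. 1 \<le> i \<Longrightarrow> i < n \<Longrightarrow> i \<noteq> c \<Longrightarrow> P (w \<circ> simple i) \<Longrightarrow> P w"
    and h: "in_Hpar n (varpi c) h"
    and nz: "hmult n Z h w \<noteq> 0"
  shows "P w"
proof -
  have hH: "in_Hn n h" using in_Hpar_Hn[OF h] .
  have "hmult n Z h = (\<lambda>w. \<Sum>x\<in>Sn n. h x * hmult n Z (Tb x) w)"
    by (subst expansion[OF hH]) (rule hmult_sum2)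
  then have "(\<Sum>x\<in>Sn n. h x * hmult n Z (Tb x) w) \<noteq> 0" using nz by simp
  then obtain x where x: "x \<in> Sn n" "h x * hmult n Z (Tb x) w \<noteq> 0" using sum_nonzero by blast
  then have hx: "h x \<noteq> 0" and hz: "hmult n Z (Tb x) w \<noteq> 0" by auto
  have xst: "x \<in> stab n (varpi c)" using hx h unfolding in_Hpar_def by blast
  note xi = stab_image[OF xst]
  obtain xs where xs: "valid n xs" "c \<notin> set xs" "word_perm xs = x" "length xs = len n x"
    using exists_word[OF xi] by blast
  have "Tb x = PT n xs" using PT_reduced[OF xs(1)] xs(3,4) by simp
  then have nz: "fold (rmul_s n) xs Z w \<noteq> 0" using hz hmult_PT[OF xs(1) Z] by simp
  show "P w"
  proof (rule fold_rmul_supp[where ws = xs and x = Z and n = n, OF _ _ nz])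
    fix i w assume "i \<in> set xs" "P (w \<circ> simple i)"
    moreover have "1 \<le> i" "i < n" "i \<noteq> c" using xs(1,2) \<open>i \<in> set xs\<close> unfolding valid_def by auto
    ultimately show "P w" using cl by blast
  next
    fix w assume "Z w \<noteq> 0" then show "P w" by (rule ZP)
  qed
qed

section \<open>Bruhat-type counting invariant\<close>

definition Good :: "(nat \<Rightarrow> nat) \<Rightarrow> (nat \<Rightarrow> nat) \<Rightarrow> bool" where
  "Good p v \<longleftrightarrow> (\<forall>a' m. card (p ` {1..a'} \<inter> {..m}) \<le> card (v ` {1..a'} \<inter> {..m}))"

lemma card_insert_atMost:
  assumes "finite A" "x \<notin> A"
  shows "card (insert x A \<inter> {..m}) = card (A \<inter> {..m}) + (if x \<le> m then 1 else 0)"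
proof (cases "x \<le> m")
  case True
  then have "insert x A \<inter> {..m} = insert x (A \<inter> {..m})" by auto
  then show ?thesis using assms True by simp
next
  case False
  then have "insert x A \<inter> {..m} = A \<inter> {..m}" by auto
  then show ?thesis using False by simp
qed

lemma img_Suc: "q ` {1..Suc k} = insert (q (Suc k)) (q ` {1..k})"
  by (simp add: atLeastAtMostSuc_conv)

lemma notin_img:
  assumes "inj q" "x \<notin> {1..k}" shows "q x \<notin> q ` {1..k}"
  using assms by (simp add: inj_image_mem_iff)

lemma simple_img_Suc: "simple (Suc k) ` {1..Suc k} = insert (Suc (Suc k)) {1..k}"
proof -
  have "simple (Suc k) ` {1..k} = {1..k}"
  proof -
    have "simple (Suc k) ` {1..k} = id ` {1..k}"
      by (rule image_cong) (auto simp: simple_def transpose_def)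
    then show ?thesis by simp
  qed
  then show ?thesis unfolding img_Suc by (simp add: simple_def)
qed

lemma comp_simple_img:
  "1 \<le> i \<Longrightarrow> a' \<noteq> i \<Longrightarrow> (q \<circ> simple i) ` {1..a'} = q ` {1..a'}"
proof -
  assume a: "1 \<le> i" "a' \<noteq> i"
  have e: "simple i ` {1..a'} = {1..a'}" using simple_image_interval[OF a(1), of a'] a(2) by simp
  show ?thesis unfolding image_comp[symmetric] e ..
qed

lemma Good_step:
  assumes p: "p \<in> Sn n" and v: "v \<in> Sn n" and i: "1 \<le> i" "i < n" and up: "p i < p (Suc i)"
    and G: "Good p v"
  shows "Good (p \<circ> simple i) v" "Good (p \<circ> simple i) (v \<circ> simple i)"
proof -
  obtain k where k: "i = Suc k" using i by (cases i) auto
  have ip: "inj p" and iv: "inj v" using Sn_inj p v by auto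
  define A where "A = p ` {1..k}"
  define V where "V = v ` {1..k}"
  have fA: "finite A" "finite V" unfolding A_def V_def by auto
  have nA: "p (Suc k) \<notin> A" "p (Suc (Suc k)) \<notin> A" "v (Suc k) \<notin> V" "v (Suc (Suc k)) \<notin> V"
    unfolding A_def V_def using notin_img[OF ip, of "Suc k" k] notin_img[OF ip, of "Suc (Suc k)" k]
      notin_img[OF iv, of "Suc k" k] notin_img[OF iv, of "Suc (Suc k)" k] by auto
  have nA2: "p (Suc (Suc k)) \<notin> insert (p (Suc k)) A" "v (Suc (Suc k)) \<notin> insert (v (Suc k)) V"
    using nA ip iv by (auto simp: inj_eq)
  have I1: "q ` {1..Suc k} = insert (q (Suc k)) (q ` {1..k})" for q :: "nat \<Rightarrow> nat" by (rule img_Suc)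
  have I2: "q ` {1..Suc (Suc k)} = insert (q (Suc (Suc k))) (insert (q (Suc k)) (q ` {1..k}))" for q :: "nat \<Rightarrow> nat"
    unfolding img_Suc[of q "Suc k"] img_Suc[of q k] ..
  have I3: "(q \<circ> simple i) ` {1..i} = insert (q (Suc (Suc k))) (q ` {1..k})" for q :: "nat \<Rightarrow> nat"
    unfolding k image_comp[symmetric] simple_img_Suc by simp
  have I1': "q ` {1..i} = insert (q (Suc k)) (q ` {1..k})" for q :: "nat \<Rightarrow> nat"
    unfolding k by (rule img_Suc)
  have G0: "card (A \<inter> {..m}) \<le> card (V \<inter> {..m})" for m
    using G unfolding Good_def A_def V_def by blast
  have G1: "card (A \<inter> {..m}) + (if p (Suc k) \<le> m then 1 else 0) \<le> card (V \<inter> {..m}) + (if v (Suc k) \<le> m then 1 else 0)" for m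
    using G[unfolded Good_def, rule_format, of "Suc k" m] unfolding I1 A_def[symmetric] V_def[symmetric]
    using card_insert_atMost[OF fA(1) nA(1)] card_insert_atMost[OF fA(2) nA(3)] by simp
  have G2: "card (A \<inter> {..m}) + (if p (Suc k) \<le> m then 1 else 0) + (if p (Suc (Suc k)) \<le> m then 1 else 0)
      \<le> card (V \<inter> {..m}) + (if v (Suc k) \<le> m then 1 else 0) + (if v (Suc (Suc k)) \<le> m then 1 else 0)" for m
    using G[unfolded Good_def, rule_format, of "Suc (Suc k)" m] unfolding I2 A_def[symmetric] V_def[symmetric]
    using card_insert_atMost[OF _ nA2(1)] card_insert_atMost[OF _ nA2(2)]
      card_insert_atMost[OF fA(1) nA(1)] card_insert_atMost[OF fA(2) nA(3)] fA by simp
  have upk: "p (Suc k) < p (Suc (Suc k))" using up k by simp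
  show "Good (p \<circ> simple i) v"
    unfolding Good_def
  proof (intro allI)
    fix a' m
    show "card ((p \<circ> simple i) ` {1..a'} \<inter> {..m}) \<le> card (v ` {1..a'} \<inter> {..m})"
    proof (cases "a' = i")
      case False then show ?thesis unfolding comp_simple_img[OF i(1) False] using G unfolding Good_def by blast
    next
      case True
      have "card ((p \<circ> simple i) ` {1..a'} \<inter> {..m}) = card (A \<inter> {..m}) + (if p (Suc (Suc k)) \<le> m then 1 else 0)"
        unfolding True I3 A_def[symmetric] using card_insert_atMost[OF fA(1) nA(2)] by simp
      also have "\<dots> \<le> card (V \<inter> {..m}) + (if v (Suc k) \<le> m then 1 else 0)"
        using G1[of m] upk by (auto split: if_splits)
      also have "\<dots> = card (v ` {1..a'} \<inter> {..m})"
        unfolding True I1' V_def[symmetric] using card_insert_atMost[OF fA(2) nA(3)] by simp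
      finally show ?thesis .
    qed
  qed
  show "Good (p \<circ> simple i) (v \<circ> simple i)"
    unfolding Good_def
  proof (intro allI)
    fix a' m
    show "card ((p \<circ> simple i) ` {1..a'} \<inter> {..m}) \<le> card ((v \<circ> simple i) ` {1..a'} \<inter> {..m})"
    proof (cases "a' = i")
      case False then show ?thesis
        unfolding comp_simple_img[OF i(1) False] using G unfolding Good_def by blast
    next
      case True
      have "card ((p \<circ> simple i) ` {1..a'} \<inter> {..m}) = card (A \<inter> {..m}) + (if p (Suc (Suc k)) \<le> m then 1 else 0)"
        unfolding True I3 A_def[symmetric] using card_insert_atMost[OF fA(1) nA(2)] by simp
      also have "\<dots> \<le> card (V \<inter> {..m}) + (if v (Suc (Suc k)) \<le> m then 1 else 0)"
      proof (cases "p (Suc (Suc k)) \<le> m")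
        case True
        then have "p (Suc k) \<le> m" using upk by simp
        then show ?thesis using G2[of m] True by (auto split: if_splits)
      next
        case False
        then show ?thesis using G0[of m] by simp
      qed
      also have "\<dots> = card ((v \<circ> simple i) ` {1..a'} \<inter> {..m})"
        unfolding True I3 V_def[symmetric] using card_insert_atMost[OF fA(2) nA(4)] by simp
      finally show ?thesis .
    qed
  qed
qed



lemma Good_refl: "Good p p"
  by (simp add: Good_def)

lemma QA_snoc_expand:
  assumes i: "1 \<le> i" "i < n"
  shows "QA n (ws @ [i]) = (\<lambda>w. 1 * rmul_s n i (QA n ws) w + (1 - tvar) * QA n ws w)"
proof -
  have "Ai i = (\<lambda>w. 1 * Tb (simple i) w + (1 - tvar) * hone w)" unfolding Ai_def by simp
  then have "QA n (ws @ [i]) = (\<lambda>w. 1 * hmult n (QA n ws) (Tb (simple i)) w + (1 - tvar) * hmult n (QA n ws) hone w)"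
    unfolding QA_snoc using hmult_pair2[of n "QA n ws" 1 "Tb (simple i)" "1 - tvar" hone] by simp
  then show ?thesis unfolding hmult_simple2[OF i] hmult_one2 .
qed

lemma QA_supp:
  "valid n ws \<Longrightarrow> len n (word_perm ws) = length ws \<Longrightarrow> QA n ws w \<noteq> 0
   \<Longrightarrow> w \<in> Sn n \<and> Good (word_perm ws) w"
proof (induction ws arbitrary: w rule: rev_induct)
  case Nil
  then have "w = id" unfolding QA_def hone_def Tb_def by (simp split: if_splits)
  then show ?case using Sn_id[of n] Good_refl[of id] by (simp add: id_def)
next
  case (snoc i ws)
  have i: "1 \<le> i" "i < n" and vw: "valid n ws" using snoc.prems by auto
  define p where "p = word_perm ws"
  have pS: "p \<in> Sn n" unfolding p_def by (rule word_perm_Sn[OF vw])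
  have wp: "word_perm (ws @ [i]) = p \<circ> simple i" unfolding p_def by simp
  have l1: "len n (p \<circ> simple i) = Suc (length ws)" using snoc.prems(2) unfolding wp by (simp add: comp_def)
  have l2: "len n p \<le> length ws" using len_word_right[OF vw, of id] unfolding p_def by simp
  have l3: "len n (p \<circ> simple i) \<le> Suc (len n p)" by (rule len_right_le[OF i])
  have lp: "len n p = length ws" using l1 l2 l3 by linarith
  have up: "p i < p (Suc i)"
  proof (rule ccontr)
    assume "\<not> p i < p (Suc i)"
    moreover have "p i \<noteq> p (Suc i)" using Sn_inj[OF pS] by (simp add: inj_eq)
    ultimately have "p (Suc i) < p i" by simp
    from len_right_down[OF i this] l1 lp show False by simp
  qed
  have IH: "\<And>w. QA n ws w \<noteq> 0 \<Longrightarrow> w \<in> Sn n \<and> Good p w"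
    using snoc.IH[OF vw] lp unfolding p_def by simp
  have "rmul_s n i (QA n ws) w \<noteq> 0 \<or> QA n ws w \<noteq> 0"
    using snoc.prems(3) unfolding QA_snoc_expand[OF i] by auto
  then have "QA n ws w \<noteq> 0 \<or> QA n ws (w \<circ> simple i) \<noteq> 0" using rmul_supp by blast
  then show ?case
  proof
    assume "QA n ws w \<noteq> 0"
    then have "w \<in> Sn n" "Good p w" using IH by auto
    then show ?thesis unfolding wp using Good_step(1)[OF pS _ i up] by blast
  next
    assume "QA n ws (w \<circ> simple i) \<noteq> 0"
    then have ws: "w \<circ> simple i \<in> Sn n" "Good p (w \<circ> simple i)" using IH by auto
    have wS: "w \<in> Sn n" using ws(1) Sn_simple_right[OF i] by simp
    have g: "Good (p \<circ> simple i) (w \<circ> simple i \<circ> simple i)" using Good_step(2)[OF pS ws(1) i up ws(2)] .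
    have e: "w \<circ> simple i \<circ> simple i = w" by (simp add: fun_eq_iff)
    have "Good (p \<circ> simple i) w" using g unfolding e .
    then show ?thesis unfolding wp using wS by blast
  qed
qed

section \<open>Columns\<close>

definition Lc :: "nat \<Rightarrow> nat set \<Rightarrow> nat list" where
  "Lc n C = sorted_list_of_set C @ sorted_list_of_set ({1..n} - C)"

lemma Lc_props:
  assumes C: "C \<subseteq> {1..n}"
  shows "distinct (Lc n C)" "set (Lc n C) = {1..n}" "length (Lc n C) = n"
proof -
  have fC: "finite C" using C finite_subset by blast
  show d: "distinct (Lc n C)" unfolding Lc_def using fC by auto
  show s: "set (Lc n C) = {1..n}" unfolding Lc_def using fC C by auto
  show "length (Lc n C) = n" using distinct_card[OF d] s by simp
qed

lemma uC_eq: "k \<in> {1..n} \<Longrightarrow> uC n C k = Lc n C ! (k - 1)"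
  unfolding uC_def Lc_def by simp

lemma uC_Sn:
  assumes C: "C \<subseteq> {1..n}" shows "uC n C \<in> Sn n"
proof -
  note L = Lc_props[OF C]
  have inj: "inj_on (uC n C) {1..n}"
  proof (rule inj_onI)
    fix x y assume x: "x \<in> {1..n}" and y: "y \<in> {1..n}" and e: "uC n C x = uC n C y"
    then have "Lc n C ! (x - 1) = Lc n C ! (y - 1)" using uC_eq by simp
    then have "x - 1 = y - 1" using nth_eq_iff_index_eq[OF L(1)] L(3) x y by auto
    then show "x = y" using x y by auto
  qed
  have img: "uC n C ` {1..n} = {1..n}"
  proof
    show "uC n C ` {1..n} \<subseteq> {1..n}"
    proof
      fix y assume "y \<in> uC n C ` {1..n}"
      then obtain x where x: "x \<in> {1..n}" "y = uC n C x" by blast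
      then have "y \<in> set (Lc n C)" using uC_eq[OF x(1)] L(3) nth_mem[of "x - 1" "Lc n C"] by auto
      then show "y \<in> {1..n}" using L(2) by simp
    qed
    show "{1..n} \<subseteq> uC n C ` {1..n}"
    proof
      fix y assume "y \<in> {1..n}"
      then have "y \<in> set (Lc n C)" using L(2) by simp
      then obtain j where j: "j < n" "Lc n C ! j = y" using L(3) by (auto simp: in_set_conv_nth)
      then have "uC n C (Suc j) = y" using uC_eq[of "Suc j" n C] by simp
      moreover have "Suc j \<in> {1..n}" using j by simp
      ultimately show "y \<in> uC n C ` {1..n}" by (metis image_eqI)
    qed
  qed
  have "uC n C permutes {1..n}"
    by (rule bij_imp_permutes) (use inj img in \<open>auto simp: bij_betw_def uC_def\<close>)
  then show ?thesis by (simp add: Sn_def)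
qed

lemma uC_img:
  assumes C: "C \<subseteq> {1..n}" shows "uC n C ` {1..card C} = C"
proof -
  have fC: "finite C" using C finite_subset by blast
  have cn: "card C \<le> n" using card_mono[OF _ C] by simp
  let ?s = "sorted_list_of_set C"
  have ls: "length ?s = card C" using fC by simp
  have e: "uC n C k = ?s ! (k - 1)" if "k \<in> {1..card C}" for k
    using that cn uC_eq[of k n C] ls unfolding Lc_def by (auto simp: nth_append)
  have "uC n C ` {1..card C} = (\<lambda>k. ?s ! (k - 1)) ` {1..card C}"
    by (rule image_cong) (simp_all add: e)
  also have "\<dots> = set ?s"
  proof
    show "(\<lambda>k. ?s ! (k - 1)) ` {1..card C} \<subseteq> set ?s" using ls by auto
    show "set ?s \<subseteq> (\<lambda>k. ?s ! (k - 1)) ` {1..card C}"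
    proof
      fix y assume "y \<in> set ?s"
      then obtain j where j: "j < card C" "?s ! j = y" using ls by (auto simp: in_set_conv_nth)
      then show "y \<in> (\<lambda>k. ?s ! (k - 1)) ` {1..card C}"
        using image_eqI[of y "\<lambda>k. ?s ! (k - 1)" "Suc j"] by simp
    qed
  qed
  also have "\<dots> = C" using fC by simp
  finally show ?thesis .
qed

lemma not_semistandard_count:
  assumes F: "F \<subseteq> {1..n}" "card F = b" and E: "E \<subseteq> {1..n}" "card E = a" and ab: "a \<le> b"
    and ns: "\<not> semistandard a F E"
  shows "\<exists>M. card (F \<inter> {..M}) < card (E \<inter> {..M})"
proof -
  have fF: "finite F" and fE: "finite E" using F E finite_subset by auto
  obtain i where i: "i \<in> {1..a}" "col E i < col F i" using ns unfolding semistandard_def by auto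
  let ?sE = "sorted_list_of_set E" and ?sF = "sorted_list_of_set F"
  have lE: "length ?sE = a" and lF: "length ?sF = b" using fE fF E F by simp_all
  have sE: "sorted_wrt (<) ?sE" and sF: "sorted_wrt (<) ?sF" by simp_all
  define M where "M = ?sE ! (i - 1)"
  have "set (take i ?sE) \<subseteq> E \<inter> {..M}"
  proof
    fix x assume "x \<in> set (take i ?sE)"
    then obtain j where j: "j < length (take i ?sE)" "take i ?sE ! j = x" by (auto simp: in_set_conv_nth)
    then have j2: "j < i" "j < a" "x = ?sE ! j" using lE by auto
    have "x \<in> E" using j2 lE fE nth_mem[of j ?sE] by simp
    moreover have "x \<le> M"
    proof (cases "j = i - 1")
      case True then show ?thesis unfolding M_def j2(3) by simp
    next
      case False
      then have "j < i - 1" using j2 by simp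
      then have "?sE ! j < ?sE ! (i - 1)" using sorted_wrt_nth_less[OF sE] lE i by auto
      then show ?thesis unfolding M_def j2(3) by simp
    qed
    ultimately show "x \<in> E \<inter> {..M}" by simp
  qed
  moreover have "card (set (take i ?sE)) = i"
    using distinct_card[of "take i ?sE"] lE i by simp
  ultimately have cE: "i \<le> card (E \<inter> {..M})" using card_mono[of "E \<inter> {..M}"] fE by (metis finite_Int)
  have "F \<inter> {..M} \<subseteq> set (take (i - 1) ?sF)"
  proof
    fix x assume x: "x \<in> F \<inter> {..M}"
    then have "x \<in> set ?sF" using fF by simp
    then obtain j where j: "j < b" "?sF ! j = x" using lF by (auto simp: in_set_conv_nth)
    have "j < i - 1"
    proof (rule ccontr)
      assume "\<not> j < i - 1"
      then have "?sF ! (i - 1) \<le> ?sF ! j"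
        using sorted_wrt_nth_less[OF sF, of "i - 1" j] j lF by (cases "i - 1 = j") auto
      moreover have "M < ?sF ! (i - 1)" using i(2) unfolding M_def col_def by simp
      ultimately show False using j x by simp
    qed
    then show "x \<in> set (take (i - 1) ?sF)" using j lF by (auto simp: in_set_conv_nth)
  qed
  then have "card (F \<inter> {..M}) \<le> card (set (take (i - 1) ?sF))" by (simp add: card_mono)
  also have "\<dots> \<le> i - 1" using card_length[of "take (i - 1) ?sF"] by simp
  also have "\<dots> < i" using i by auto
  also have "\<dots> \<le> card (E \<inter> {..M})" by (rule cE)
  finally have "card (F \<inter> {..M}) < card (E \<inter> {..M})" .
  then show ?thesis by blast
qed



lemma finite_B: "finite (B n b)"
  by (rule finite_subset[of _ "Pow {1..n}"]) (auto simp: B_def)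

lemma hmult_zero2: "hmult n Z (\<lambda>_. 0) = (\<lambda>_. 0)"
  unfolding hmult_def by simp

theorem proposition5p2:
  fixes n a b :: nat and h :: hecke and E :: "nat set"
    and hF :: "nat set \<Rightarrow> hecke" and F :: "nat set"
  assumes "1 \<le> a" "a \<le> b" "b \<le> n"
    and "in_Hpar n (varpi a) h"
    and "E \<in> B n a"
    and "\<forall>G\<in>B n b. in_Hpar n (varpi b) (hF G)"
    and "hmult n (hsmult (tvar ^ len n (uC n E)) (hinverse n (Tb (inv (uC n E))))) h
         = (\<lambda>w. \<Sum>G\<in>B n b. hmult n (Tb (uC n G)) (hF G) w)"
    and "F \<in> B n b"
    and "\<not> semistandard a F E"
  shows "\<forall>w. hF F w = 0"
proof -
  note ab = assms(2) and hpar = assms(4) and EB = assms(5) and hFpar = assms(6)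
    and eq = assms(7) and FB = assms(8) and ns = assms(9)
  have E: "E \<subseteq> {1..n}" "card E = a" using EB by (auto simp: B_def)
  have F: "F \<subseteq> {1..n}" "card F = b" using FB by (auto simp: B_def)
  define u where "u = uC n E"
  have uS: "u \<in> Sn n" unfolding u_def by (rule uC_Sn[OF E(1)])
  have uE: "u ` {1..a} = E" unfolding u_def using uC_img[OF E(1)] E(2) by simp
  define ws where "ws = reduced_word n u"
  note r = reduced_word_spec[OF uS]
  have LHS: "hmult n (hsmult (tvar ^ len n u) (hinverse n (Tb (inv u)))) h = hmult n (QA n ws) h"
    unfolding hinverse_eq[OF uS] hsmult_hsmult tpow_cancel(2) ws_def by simp
  have L0: "card (E \<inter> {..M}) \<le> card (w ` {1..a} \<inter> {..M})"
    if nz: "hmult n (QA n ws) h w \<noteq> 0" for w M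
  proof -
    have "(\<lambda>w. \<exists>v. Good u v \<and> w ` {1..a} = v ` {1..a}) w"
    proof (rule supp_hmult_par[where c = a, OF in_Hn_QA _ _ hpar nz])
      fix w assume "QA n ws w \<noteq> 0"
      then have "Good u w" using QA_supp[OF r(1)] r(2,3) unfolding ws_def by auto
      then show "\<exists>v. Good u v \<and> w ` {1..a} = v ` {1..a}" by blast
    next
      fix i w assume i: "1 \<le> i" "i < n" "i \<noteq> a"
        and P: "\<exists>v. Good u v \<and> (w \<circ> simple i) ` {1..a} = v ` {1..a}"
      have "a \<noteq> i" using i by simp
      then have "(w \<circ> simple i) ` {1..a} = w ` {1..a}" by (rule comp_simple_img[OF i(1)])
      then show "\<exists>v. Good u v \<and> w ` {1..a} = v ` {1..a}" using P by simp
    qed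
    then obtain v where v: "Good u v" "w ` {1..a} = v ` {1..a}" by blast
    have "card (u ` {1..a} \<inter> {..M}) \<le> card (v ` {1..a} \<inter> {..M})" using v(1) unfolding Good_def by blast
    then show ?thesis using uE v(2) by simp
  qed
  have R0: "w ` {1..b} = G" if G: "G \<in> B n b" and nz: "hmult n (Tb (uC n G)) (hF G) w \<noteq> 0" for G w
  proof -
    have G': "G \<subseteq> {1..n}" "card G = b" using G by (auto simp: B_def)
    have uGS: "uC n G \<in> Sn n" by (rule uC_Sn[OF G'(1)])
    have uGi: "uC n G ` {1..b} = G" using uC_img[OF G'(1)] G'(2) by simp
    show "(\<lambda>w. w ` {1..b} = G) w"
    proof (rule supp_hmult_par[where c = b, OF Tb_in_Hn[OF uGS] _ _ _ nz])
      fix w assume "Tb (uC n G) w \<noteq> 0"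
      then have "w = uC n G" unfolding Tb_def by (simp split: if_splits)
      then show "w ` {1..b} = G" using uGi by simp
    next
      fix i w assume i: "1 \<le> i" "i < n" "i \<noteq> b" and P: "(w \<circ> simple i) ` {1..b} = G"
      have "b \<noteq> i" using i by simp
      then have "(w \<circ> simple i) ` {1..b} = w ` {1..b}" by (rule comp_simple_img[OF i(1)])
      then show "w ` {1..b} = G" using P by simp
    next
      show "in_Hpar n (varpi b) (hF G)" using hFpar G by blast
    qed
  qed
  define X where "X = hmult n (Tb (uC n F)) (hF F)"
  have X0: "X w = 0" for w
  proof (cases "w ` {1..b} = F")
    case False then show ?thesis using R0[OF FB] unfolding X_def by blast
  next
    case True
    have others: "hmult n (Tb (uC n G)) (hF G) w = 0" if "G \<in> B n b - {F}" for G
      using R0[of G w] that True by auto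
    have sum: "(\<Sum>G\<in>B n b. hmult n (Tb (uC n G)) (hF G) w) = X w"
      unfolding X_def using sum.remove[OF finite_B FB, of "\<lambda>G. hmult n (Tb (uC n G)) (hF G) w"] others
      by simp
    have lz: "hmult n (QA n ws) h w = 0"
    proof (rule ccontr)
      assume nz: "hmult n (QA n ws) h w \<noteq> 0"
      obtain M where M: "card (F \<inter> {..M}) < card (E \<inter> {..M})"
        using not_semistandard_count[OF F E ab ns] by blast
      have "w ` {1..a} \<subseteq> F" using True ab by auto
      then have "card (w ` {1..a} \<inter> {..M}) \<le> card (F \<inter> {..M})"
        using F(1) finite_subset[OF _ finite_atLeastAtMost] by (intro card_mono) auto
      then show False using L0[OF nz, of M] M by simp
    qed
    have "hmult n (QA n ws) h w = (\<Sum>G\<in>B n b. hmult n (Tb (uC n G)) (hF G) w)"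
      using fun_cong[OF eq, of w] LHS unfolding u_def by simp
    then show ?thesis using sum lz by simp
  qed
  have XZ: "X = (\<lambda>_. 0)" using X0 by auto
  have hFH: "in_Hn n (hF F)" using hFpar FB in_Hpar_Hn by blast
  let ?uF = "uC n F"
  have uFS: "?uF \<in> Sn n" by (rule uC_Sn[OF F(1)])
  have iuF: "inv ?uF \<in> Sn n" by (rule Sn_inv[OF uFS])
  have ii: "inv (inv ?uF) = ?uF" using uFS unfolding Sn_def by (simp add: permutes_inv_inv)
  obtain Z where Z: "in_Hn n Z" "hmult n Z (Tb ?uF) = hone"
    using inverse_pair(1,3)[OF iuF] unfolding ii by blast
  have "hF F = hmult n hone (hF F)" using hmult_one1[OF hFH] by simp
  also have "\<dots> = hmult n (hmult n Z (Tb ?uF)) (hF F)" using Z(2) by simp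
  also have "\<dots> = hmult n Z X" unfolding X_def by (rule hmult_assoc[OF Z(1) Tb_in_Hn[OF uFS] hFH])
  also have "\<dots> = (\<lambda>_. 0)" unfolding XZ by (rule hmult_zero2)
  finally show ?thesis by simp
qed


end
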